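(* Let $\Gamma$ be a Gromov hyperbolic graph and $c$ a vertex of $\Gamma$. Suppose: (1) every point of the Gromov boundary of $\Gamma$ is represented by a geodesic ray starting at $c$; (2) every vertex $v$ of $\Gamma$ is adjacent to a vertex $u$ with $d(u,c)=d(v,c)+1$. Suppose moreover there is $D>0$ such that for all $r\ge0$: (3) for every $z\in S_r(c)$ and every $x,y\in S_{r+1}(c)\cap B_1(z)$ there is a path $x=x_0,\dots,x_\ell=y$ with $x_i\in(\Gamma\setminus B_r(c))\cap B_D(x)$ for $0\le i\le\ell$; (4) for every adjacent pair $x,y\in S_r(c)$ there is a path $x=x_0,\dots,x_\ell=y$ with $x_i\in(\Gamma\setminus B_r(c))\cap B_D(x)$ for $0<i<\ell$. Then the Gromov boundary of $\Gamma$, with a visual metric, is linearly connected.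
   Context: $d$ is the graph metric; $S_r(c)$ is the set of vertices at distance exactly $r$ from $c$ and $B_\rho(z)$ is the set of vertices at distance at most $\rho$ from $z$. A path is a sequence of vertices each adjacent to the next. A metric space $(X,d)$ is linearly connected if there is $L>0$ such that any $x,y\in X$ lie in a compact connected subset of diameter at most $L\,d(x,y)$. *)

theory Defs
  imports "HOL-Analysis.Analysis"
begin

text \<open>A (simple, undirected) graph on vertex type 'v is an adjacency relation E,
  symmetric and irreflexive. All elements of 'v are vertices.\<close>

definition simple_graph :: "('v \<Rightarrow> 'v \<Rightarrow> bool) \<Rightarrow> bool" where
  "simple_graph E \<longleftrightarrow> (\<forall>x y. E x y \<longrightarrow> E y x) \<and> (\<forall>x. \<not> E x x)"

definition is_path :: "('v \<Rightarrow> 'v \<Rightarrow> bool) \<Rightarrow> 'v list \<Rightarrow> bool" where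
  "is_path E xs \<longleftrightarrow> xs \<noteq> [] \<and> (\<forall>i. Suc i < length xs \<longrightarrow> E (xs ! i) (xs ! Suc i))"

definition connected_graph :: "('v \<Rightarrow> 'v \<Rightarrow> bool) \<Rightarrow> bool" where
  "connected_graph E \<longleftrightarrow> (\<forall>x y. \<exists>xs. is_path E xs \<and> hd xs = x \<and> last xs = y)"

definition gdist :: "('v \<Rightarrow> 'v \<Rightarrow> bool) \<Rightarrow> 'v \<Rightarrow> 'v \<Rightarrow> nat" where
  "gdist E x y = (LEAST n. \<exists>xs. is_path E xs \<and> hd xs = x \<and> last xs = y \<and> length xs = Suc n)"

definition gprod :: "('v \<Rightarrow> 'v \<Rightarrow> bool) \<Rightarrow> 'v \<Rightarrow> 'v \<Rightarrow> 'v \<Rightarrow> real" where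
  "gprod E w x y = (real (gdist E x w) + real (gdist E y w) - real (gdist E x y)) / 2"

definition gromov_hyperbolic_graph :: "('v \<Rightarrow> 'v \<Rightarrow> bool) \<Rightarrow> bool" where
  "gromov_hyperbolic_graph E \<longleftrightarrow> simple_graph E \<and> connected_graph E \<and>
     (\<exists>\<delta>\<ge>0. \<forall>w x y z. gprod E w x y \<ge> min (gprod E w x z) (gprod E w y z) - \<delta>)"

definition conv_inf :: "('v \<Rightarrow> 'v \<Rightarrow> bool) \<Rightarrow> 'v \<Rightarrow> (nat \<Rightarrow> 'v) \<Rightarrow> bool" where
  "conv_inf E w s \<longleftrightarrow> (\<forall>M. \<exists>N. \<forall>i\<ge>N. \<forall>j\<ge>N. gprod E w (s i) (s j) \<ge> M)"

definition seq_equiv :: "('v \<Rightarrow> 'v \<Rightarrow> bool) \<Rightarrow> 'v \<Rightarrow> (nat \<Rightarrow> 'v) \<Rightarrow> (nat \<Rightarrow> 'v) \<Rightarrow> bool" where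
  "seq_equiv E w s t \<longleftrightarrow> (\<forall>M. \<exists>N. \<forall>i\<ge>N. \<forall>j\<ge>N. gprod E w (s i) (t j) \<ge> M)"

text \<open>Boundary points: equivalence classes of sequences converging at infinity
  (w.r.t. basepoint w; the result does not depend on w).\<close>
definition gromov_boundary :: "('v \<Rightarrow> 'v \<Rightarrow> bool) \<Rightarrow> 'v \<Rightarrow> (nat \<Rightarrow> 'v) set set" where
  "gromov_boundary E w = {{t. conv_inf E w t \<and> seq_equiv E w s t} | s. conv_inf E w s}"

definition dliminf :: "('v \<Rightarrow> 'v \<Rightarrow> bool) \<Rightarrow> 'v \<Rightarrow> (nat \<Rightarrow> 'v) \<Rightarrow> (nat \<Rightarrow> 'v) \<Rightarrow> ereal" where
  "dliminf E w s t = (SUP n. INF i\<in>{n..}. INF j\<in>{n..}. ereal (gprod E w (s i) (t j)))"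

definition bprod :: "('v \<Rightarrow> 'v \<Rightarrow> bool) \<Rightarrow> 'v \<Rightarrow> (nat \<Rightarrow> 'v) set \<Rightarrow> (nat \<Rightarrow> 'v) set \<Rightarrow> ereal" where
  "bprod E w \<xi> \<eta> = (SUP (s, t) \<in> \<xi> \<times> \<eta>. dliminf E w s t)"

definition eexp_neg :: "real \<Rightarrow> ereal \<Rightarrow> real" where
  "eexp_neg \<epsilon> g = (if g = \<infinity> then 0 else exp (- \<epsilon> * real_of_ereal g))"

definition visual_metric ::
  "('v \<Rightarrow> 'v \<Rightarrow> bool) \<Rightarrow> 'v \<Rightarrow> 'v \<Rightarrow> real \<Rightarrow> ((nat \<Rightarrow> 'v) set \<Rightarrow> (nat \<Rightarrow> 'v) set \<Rightarrow> real) \<Rightarrow> bool" where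
  "visual_metric E c w \<epsilon> \<rho> \<longleftrightarrow> \<epsilon> > 0 \<and> Metric_space (gromov_boundary E c) \<rho> \<and>
     (\<exists>k1>0. \<exists>k2>0. \<forall>\<xi>\<in>gromov_boundary E c. \<forall>\<eta>\<in>gromov_boundary E c.
        k1 * eexp_neg \<epsilon> (bprod E w \<xi> \<eta>) \<le> \<rho> \<xi> \<eta> \<and> \<rho> \<xi> \<eta> \<le> k2 * eexp_neg \<epsilon> (bprod E w \<xi> \<eta>))"

definition linearly_connected :: "'a set \<Rightarrow> ('a \<Rightarrow> 'a \<Rightarrow> real) \<Rightarrow> bool" where
  "linearly_connected X d \<longleftrightarrow> (\<exists>L>0. \<forall>x\<in>X. \<forall>y\<in>X. \<exists>K\<subseteq>X. x \<in> K \<and> y \<in> K \<and>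
      compactin (Metric_space.mtopology X d) K \<and> connectedin (Metric_space.mtopology X d) K \<and>
      (\<forall>a\<in>K. \<forall>b\<in>K. d a b \<le> L * d x y))"

definition geodesic_ray :: "('v \<Rightarrow> 'v \<Rightarrow> bool) \<Rightarrow> (nat \<Rightarrow> 'v) \<Rightarrow> bool" where
  "geodesic_ray E \<gamma> \<longleftrightarrow> (\<forall>i j. gdist E (\<gamma> i) (\<gamma> j) = (if i \<le> j then j - i else i - j))"

end

theory Submission
  imports Defs "HOL-Library.Diagonal_Subsequence"
begin


lemma is_path_single[simp]: "is_path E [x]"
  by (simp add: is_path_def)

lemma is_path_Cons2: "is_path E (x # y # xs) \<longleftrightarrow> E x y \<and> is_path E (y # xs)"
  unfolding is_path_def
  by (auto simp: less_Suc_eq_0_disj)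

lemma is_path_Cons: "is_path E (x # xs) \<longleftrightarrow> (xs = [] \<or> (E x (hd xs) \<and> is_path E xs))"
  by (cases xs) (auto simp: is_path_Cons2)

lemma is_path_append:
  assumes "is_path E xs" "is_path E ys" "E (last xs) (hd ys)"
  shows "is_path E (xs @ ys)"
  using assms
proof (induction xs)
  case Nil then show ?case by (simp add: is_path_def)
next
  case (Cons a xs)
  show ?case
  proof (cases xs)
    case Nil
    with Cons.prems show ?thesis by (simp add: is_path_Cons)
  next
    case (Cons b zs)
    with Cons.prems Cons.IH show ?thesis by (auto simp: is_path_Cons2)
  qed
qed

lemma is_path_join:
  assumes "is_path E xs" "is_path E ys" "last xs = hd ys"
  shows "is_path E (xs @ tl ys)"
proof (cases "tl ys")
  case Nil then show ?thesis using assms by simp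
next
  case (Cons a zs)
  have ys: "ys = hd ys # a # zs" using Cons assms(2) unfolding is_path_def
    by (metis list.exhaust_sel)
  have "E (hd ys) a" "is_path E (a # zs)" using assms(2) ys is_path_Cons2 by metis+
  then show ?thesis using is_path_append[OF assms(1)] assms(3) Cons by simp
qed

lemma is_path_rev:
  assumes "simple_graph E" "is_path E xs" shows "is_path E (rev xs)"
  unfolding is_path_def
proof (intro conjI allI impI)
  show "rev xs \<noteq> []" using assms(2) unfolding is_path_def by simp
  fix i assume i: "Suc i < length (rev xs)"
  let ?n = "length xs"
  have a: "rev xs ! i = xs ! (?n - Suc i)" "rev xs ! Suc i = xs ! (?n - Suc (Suc i))"
    using i by (auto simp: rev_nth)
  have "E (xs ! (?n - Suc (Suc i))) (xs ! Suc (?n - Suc (Suc i)))"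
    using assms(2) i unfolding is_path_def by auto
  moreover have "Suc (?n - Suc (Suc i)) = ?n - Suc i" using i by simp
  ultimately show "E (rev xs ! i) (rev xs ! Suc i)" using a assms(1) unfolding simple_graph_def by metis
qed

lemma is_path_drop:
  assumes "is_path E xs" "i < length xs" shows "is_path E (drop i xs)"
  using assms unfolding is_path_def by auto

lemma is_path_take:
  assumes "is_path E xs" "0 < i" shows "is_path E (take i xs)"
  using assms unfolding is_path_def by auto

locale cgraph =
  fixes E :: "'v \<Rightarrow> 'v \<Rightarrow> bool"
  assumes simple: "simple_graph E" and conn: "connected_graph E"
begin

lemma sym: "E x y \<Longrightarrow> E y x" using simple unfolding simple_graph_def by blast
lemma irrefl: "\<not> E x x" using simple unfolding simple_graph_def by blast

lemma gdist_ex: "\<exists>xs. is_path E xs \<and> hd xs = x \<and> last xs = y \<and> length xs = Suc (gdist E x y)"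
proof -
  obtain xs where xs: "is_path E xs" "hd xs = x" "last xs = y"
    using conn unfolding connected_graph_def by blast
  then have "\<exists>n xs. is_path E xs \<and> hd xs = x \<and> last xs = y \<and> length xs = Suc n"
    by (metis is_path_def length_0_conv not0_implies_Suc)
  then show ?thesis unfolding gdist_def by (rule LeastI_ex)
qed

lemma gdist_le: "is_path E xs \<Longrightarrow> hd xs = x \<Longrightarrow> last xs = y \<Longrightarrow> gdist E x y + 1 \<le> length xs"
proof -
  assume a: "is_path E xs" "hd xs = x" "last xs = y"
  then have l: "length xs = Suc (length xs - 1)" unfolding is_path_def by (cases xs) auto
  have "gdist E x y \<le> length xs - 1" unfolding gdist_def
    by (rule Least_le) (use a l in blast)
  then show ?thesis using l by linarith
qed

lemma gdist_refl[simp]: "gdist E x x = 0"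
  using gdist_le[of "[x]" x x] by simp

lemma gdist_0: "gdist E x y = 0 \<Longrightarrow> x = y"
  using gdist_ex[of x y] by (auto simp: length_Suc_conv)

lemma gdist_sym: "gdist E x y = gdist E y x"
proof -
  have "gdist E y x \<le> gdist E x y" for x y
  proof -
    obtain xs where "is_path E xs" "hd xs = x" "last xs = y" "length xs = Suc (gdist E x y)"
      using gdist_ex by blast
    then show ?thesis using gdist_le[of "rev xs" y x] is_path_rev[OF simple]
      by (simp add: hd_rev last_rev)
  qed
  then show ?thesis by (meson le_antisym)
qed

lemma gdist_tri: "gdist E x z \<le> gdist E x y + gdist E y z"
proof -
  obtain xs where xs: "is_path E xs" "hd xs = x" "last xs = y" "length xs = Suc (gdist E x y)"
    using gdist_ex by blast
  obtain ys where ys: "is_path E ys" "hd ys = y" "last ys = z" "length ys = Suc (gdist E y z)"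
    using gdist_ex by blast
  have p: "is_path E (xs @ tl ys)" using is_path_join xs ys by metis
  have "hd (xs @ tl ys) = x" using xs by (simp add: is_path_def)
  moreover have "last (xs @ tl ys) = z"
  proof (cases "tl ys = []")
    case True
    then have "ys = [y]" using ys(1,2) unfolding is_path_def by (cases ys) auto
    then show ?thesis using True xs ys by simp
  next
    case False
    then show ?thesis using ys by (simp add: last_tl)
  qed
  ultimately show ?thesis using gdist_le[OF p] xs ys by simp
qed

lemma gdist_edge: "E x y \<Longrightarrow> gdist E x y = 1"
proof -
  assume e: "E x y"
  have "gdist E x y \<le> 1" using gdist_le[of "[x,y]" x y] e by (simp add: is_path_Cons2)
  moreover have "x \<noteq> y" using e irrefl by blast
  moreover have "gdist E x y \<noteq> 0" using gdist_0 \<open>x \<noteq> y\<close> by blast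
  ultimately show ?thesis by linarith
qed

lemma gdist_one: "gdist E x y = 1 \<Longrightarrow> E x y"
proof -
  assume "gdist E x y = 1"
  then obtain xs where "is_path E xs" "hd xs = x" "last xs = y" "length xs = 2"
    using gdist_ex[of x y] by auto
  then show "E x y" unfolding is_path_def
    by (auto simp: numeral_2_eq_2 length_Suc_conv)
qed

lemma gdist_le1_cases: "gdist E x y \<le> 1 \<Longrightarrow> x = y \<or> E x y"
proof -
  assume "gdist E x y \<le> 1"
  then have "gdist E x y = 0 \<or> gdist E x y = 1" by linarith
  then show ?thesis using gdist_0 gdist_one by blast
qed

lemma path_gdist:
  assumes "is_path E xs" "i \<le> j" "j < length xs"
  shows "gdist E (xs ! i) (xs ! j) \<le> j - i"
proof -
  let ?ys = "take (Suc (j - i)) (drop i xs)"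
  have p: "is_path E ?ys" using assms by (intro is_path_take is_path_drop) auto
  have "hd ?ys = xs ! i" using assms by (simp add: hd_drop_conv_nth)
  moreover have "last ?ys = xs ! j" using assms
  proof -
    have "length ?ys = Suc (j - i)" using assms by simp
    then have "last ?ys = ?ys ! (j - i)" by (metis diff_Suc_1 last_conv_nth length_0_conv nat.distinct(1))
    also have "\<dots> = xs ! j" using assms by simp
    finally show ?thesis .
  qed
  moreover have "length ?ys = Suc (j - i)" using assms by simp
  ultimately show ?thesis using gdist_le[OF p] by simp
qed

lemma path_gdist':
  assumes "is_path E xs" "i < length xs" "j < length xs"
  shows "gdist E (xs ! i) (xs ! j) \<le> length xs - 1"
proof (cases "i \<le> j")
  case True
  then show ?thesis using path_gdist[OF assms(1) True assms(3)] assms by linarith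
next
  case False
  then show ?thesis using path_gdist[OF assms(1) _ assms(2), of j] assms gdist_sym[of "xs!i" "xs!j"] by linarith
qed

end



definition cls :: "('v \<Rightarrow> 'v \<Rightarrow> bool) \<Rightarrow> 'v \<Rightarrow> (nat \<Rightarrow> 'v) \<Rightarrow> (nat \<Rightarrow> 'v) set" where
  "cls E w s = {t. conv_inf E w t \<and> seq_equiv E w s t}"

locale hgraph = cgraph +
  fixes \<delta> :: real
  assumes delta_nonneg: "\<delta> \<ge> 0"
    and fourpt: "\<And>w x y z. gprod E w x y \<ge> min (gprod E w x z) (gprod E w y z) - \<delta>"
begin

lemma rtri: "real (gdist E x z) \<le> real (gdist E x y) + real (gdist E y z)"
  using gdist_tri[of x z y] by (metis of_nat_add of_nat_le_iff)

lemma rsym: "real (gdist E x y) = real (gdist E y x)"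
  using gdist_sym by simp

lemma gprod_sym: "gprod E w x y = gprod E w y x"
  unfolding gprod_def using gdist_sym by simp

lemma gprod_nonneg: "gprod E w x y \<ge> 0"
  unfolding gprod_def using rtri[of x y w] rsym[of w y] by simp

lemma gprod_le: "gprod E w x y \<le> gdist E x w"
  unfolding gprod_def using rtri[of y w x] rsym[of x y] by simp

lemma gprod_base: "gprod E w x y \<ge> gprod E c x y - gdist E c w"
  unfolding gprod_def using rtri[of x c w] rtri[of y c w] rsym[of w c] by (simp add: field_simps)

lemma fourpt2: "gprod E w x y \<ge> min (gprod E w x u) (min (gprod E w u v) (gprod E w v y)) - 2 * \<delta>"
proof -
  have "gprod E w x y \<ge> min (gprod E w x v) (gprod E w y v) - \<delta>" by (rule fourpt)
  moreover have "gprod E w x v \<ge> min (gprod E w x u) (gprod E w v u) - \<delta>" by (rule fourpt)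
  ultimately show ?thesis using gprod_sym[of w v u] gprod_sym[of w y v] delta_nonneg by linarith
qed

lemma equiv_sym: "seq_equiv E w s t \<Longrightarrow> seq_equiv E w t s"
  unfolding seq_equiv_def using gprod_sym by metis

lemma equiv_trans:
  assumes "seq_equiv E w s t" "seq_equiv E w t u"
  shows "seq_equiv E w s u"
  unfolding seq_equiv_def
proof
  fix M
  obtain N1 where N1: "\<forall>i\<ge>N1. \<forall>j\<ge>N1. gprod E w (s i) (t j) \<ge> M + \<delta>"
    using assms(1) unfolding seq_equiv_def by blast
  obtain N2 where N2: "\<forall>i\<ge>N2. \<forall>j\<ge>N2. gprod E w (t i) (u j) \<ge> M + \<delta>"
    using assms(2) unfolding seq_equiv_def by blast
  let ?N = "max N1 N2"
  have "gprod E w (s i) (u j) \<ge> M" if "i \<ge> ?N" "j \<ge> ?N" for i j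
  proof -
    have "gprod E w (s i) (u j) \<ge> min (gprod E w (s i) (t ?N)) (gprod E w (u j) (t ?N)) - \<delta>"
      by (rule fourpt)
    moreover have "gprod E w (s i) (t ?N) \<ge> M + \<delta>" using N1 that by simp
    moreover have "gprod E w (t ?N) (u j) \<ge> M + \<delta>" using N2 that by simp
    moreover have "gprod E w (u j) (t ?N) = gprod E w (t ?N) (u j)" by (rule gprod_sym)
    ultimately show ?thesis by linarith
  qed
  then show "\<exists>N. \<forall>i\<ge>N. \<forall>j\<ge>N. M \<le> gprod E w (s i) (u j)" by blast
qed


lemma self_equiv: "conv_inf E w s \<Longrightarrow> seq_equiv E w s s"
  unfolding conv_inf_def seq_equiv_def by blast

lemma in_cls: "conv_inf E w s \<Longrightarrow> s \<in> cls E w s"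
  unfolding cls_def using self_equiv by blast

lemma cls_eq: "seq_equiv E w s t \<Longrightarrow> cls E w s = cls E w t"
  unfolding cls_def using equiv_trans equiv_sym by blast

lemma boundary_cls: "\<xi> \<in> gromov_boundary E w \<longleftrightarrow> (\<exists>s. conv_inf E w s \<and> \<xi> = cls E w s)"
  unfolding gromov_boundary_def cls_def by blast

lemma boundary_mem:
  assumes "\<xi> \<in> gromov_boundary E w" "t \<in> \<xi>"
  shows "conv_inf E w t" "\<xi> = cls E w t"
proof -
  obtain s where s: "conv_inf E w s" "\<xi> = cls E w s" using assms(1) boundary_cls by blast
  then have "seq_equiv E w s t" "conv_inf E w t" using assms(2) unfolding cls_def by auto
  then show "conv_inf E w t" "\<xi> = cls E w t" using cls_eq s by auto
qed

lemma dliminf_ge: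
  assumes "\<forall>i\<ge>N. \<forall>j\<ge>N. gprod E w (s i) (t j) \<ge> a"
  shows "dliminf E w s t \<ge> ereal a"
proof -
  have "ereal a \<le> (INF i\<in>{N..}. INF j\<in>{N..}. ereal (gprod E w (s i) (t j)))"
    using assms by (auto intro!: INF_greatest)
  also have "\<dots> \<le> dliminf E w s t" unfolding dliminf_def by (rule SUP_upper) simp
  finally show ?thesis .
qed

lemma dliminf_gt:
  assumes "dliminf E w s t > ereal a"
  shows "\<exists>N. \<forall>i\<ge>N. \<forall>j\<ge>N. gprod E w (s i) (t j) > a"
proof -
  obtain N where N: "ereal a < (INF i\<in>{N..}. INF j\<in>{N..}. ereal (gprod E w (s i) (t j)))"
    using assms unfolding dliminf_def by (auto simp: less_SUP_iff)
  have "gprod E w (s i) (t j) > a" if "i \<ge> N" "j \<ge> N" for i j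
  proof -
    have "(INF i\<in>{N..}. INF j\<in>{N..}. ereal (gprod E w (s i) (t j))) \<le> ereal (gprod E w (s i) (t j))"
      using that by (meson INF_lower2 atLeast_iff order_refl)
    then have "ereal a < ereal (gprod E w (s i) (t j))" using N by (rule order.strict_trans2[rotated])
    then show ?thesis by simp
  qed
  then show ?thesis by blast
qed

lemma bprod_ge: "s \<in> \<xi> \<Longrightarrow> t \<in> \<eta> \<Longrightarrow> bprod E w \<xi> \<eta> \<ge> dliminf E w s t"
  unfolding bprod_def by (rule SUP_upper2[of "(s,t)"]) auto

lemma bprod_le: "(\<And>s t. s \<in> \<xi> \<Longrightarrow> t \<in> \<eta> \<Longrightarrow> dliminf E w s t \<le> b) \<Longrightarrow> bprod E w \<xi> \<eta> \<le> b"
  unfolding bprod_def by (rule SUP_least) auto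

end

lemma eexp_upper:
  assumes "\<epsilon> > 0" "g \<ge> ereal a"
  shows "eexp_neg \<epsilon> g \<le> exp (- \<epsilon> * a)"
proof (cases g)
  case (real r)
  then show ?thesis using assms by (simp add: eexp_neg_def)
next
  case PInf then show ?thesis by (simp add: eexp_neg_def)
next
  case MInf then show ?thesis using assms by simp
qed

lemma eexp_lower:
  assumes "\<epsilon> > 0" "g \<le> ereal a" "a \<ge> 0"
  shows "eexp_neg \<epsilon> g \<ge> exp (- \<epsilon> * a)"
proof (cases g)
  case (real r)
  then show ?thesis using assms by (simp add: eexp_neg_def)
next
  case PInf then show ?thesis using assms by simp
next
  case MInf then show ?thesis using assms by (simp add: eexp_neg_def)
qed




context hgraph begin

definition sC :: "nat" where "sC = nat \<lceil>\<delta>\<rceil> + 1"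

lemma sC_ge: "real sC \<ge> \<delta>" "real sC \<ge> 1"
  unfolding sC_def using delta_nonneg by linarith+

lemma step_dist:
  assumes step: "\<And>k. gdist E (x k) (x (Suc k)) \<le> B"
  shows "gdist E (x a) (x (a + j)) \<le> j * B"
proof (induction j)
  case 0 then show ?case by simp
next
  case (Suc j)
  have "gdist E (x a) (x (a + Suc j)) \<le> gdist E (x a) (x (a + j)) + gdist E (x (a + j)) (x (Suc (a + j)))"
    using gdist_tri by simp
  then show ?case using Suc step[of "a + j"] by simp
qed

lemma chain_bound:
  assumes lev: "\<And>k. gdist E (x k) c \<ge> m1 + k"
    and step: "\<And>k. gdist E (x k) (x (Suc k)) \<le> B"
  shows "gprod E c (x a) (x (a + j)) \<ge> real m1 + real a - (real sC * real B / 2 + \<delta>)"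
proof (induction j arbitrary: a rule: less_induct)
  case (less j)
  have near: "gprod E c (x a) (x (a + i)) \<ge> real m1 + real a - real sC * real B / 2" if "i \<le> sC" for i a
  proof -
    have d: "real (gdist E (x a) (x (a + i))) \<le> real i * real B"
      using step_dist[of x B a i, OF step] by (metis of_nat_le_iff of_nat_mult)
    have l1: "real (gdist E (x a) c) \<ge> real m1 + real a" using lev[of a] by (metis of_nat_add of_nat_le_iff)
    have l2: "real (gdist E (x (a + i)) c) \<ge> real m1 + real a + real i" using lev[of "a+i"] by (metis add.assoc of_nat_add of_nat_le_iff)
    have "real i * real B \<le> real sC * real B" using that by (simp add: mult_right_mono)
    then show ?thesis unfolding gprod_def using d l1 l2 by (simp add: field_simps)
  qed
  show ?case
  proof (cases "j \<le> sC")
    case True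
    then show ?thesis using near[of j a] delta_nonneg by linarith
  next
    case False
    let ?z = "x (a + sC)"
    have f: "gprod E c (x a) (x (a + j)) \<ge> min (gprod E c (x a) ?z) (gprod E c (x (a + j)) ?z) - \<delta>"
      by (rule fourpt)
    have g1: "gprod E c (x a) ?z \<ge> real m1 + real a - real sC * real B / 2" using near[of sC a] by simp
    have "j - sC < j" using False sC_ge by simp
    then have "gprod E c (x (a + sC)) (x (a + sC + (j - sC))) \<ge> real m1 + real (a + sC) - (real sC * real B / 2 + \<delta>)"
      using less.IH by blast
    moreover have "a + sC + (j - sC) = a + j" using False by simp
    ultimately have g2: "gprod E c (x (a + j)) ?z \<ge> real m1 + real a + real sC - (real sC * real B / 2 + \<delta>)"
      using gprod_sym by simp
    show ?thesis using f g1 g2 sC_ge delta_nonneg by linarith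
  qed
qed

definition CC :: "nat \<Rightarrow> real" where "CC B = real sC * real B / 2 + \<delta>"

lemma chain_bound':
  assumes lev: "\<And>k. gdist E (x k) c \<ge> m1 + k"
    and step: "\<And>k. gdist E (x k) (x (Suc k)) \<le> B"
    and "a \<le> b"
  shows "gprod E c (x a) (x b) \<ge> real m1 + real a - CC B"
  using chain_bound[OF lev step, of a "b - a"] assms(3) unfolding CC_def by simp

lemma two_chains:
  assumes lev: "\<And>k. gdist E (x k) c \<ge> m1 + k" and step: "\<And>k. gdist E (x k) (x (Suc k)) \<le> B"
    and lev': "\<And>k. gdist E (y k) c \<ge> m1 + k" and step': "\<And>k. gdist E (y k) (y (Suc k)) \<le> B"
    and R: "gdist E (x k) (y k) \<le> R" and "i \<ge> k" "j \<ge> k"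
  shows "gprod E c (x i) (y j) \<ge> real m1 + real k - CC B - real R / 2 - 2 * \<delta>"
proof -
  have F: "gprod E c (x i) (y j) \<ge> min (gprod E c (x i) (x k)) (min (gprod E c (x k) (y k)) (gprod E c (y k) (y j))) - 2 * \<delta>"
    by (rule fourpt2)
  moreover have "gprod E c (x i) (x k) \<ge> real m1 + real k - CC B"
    using chain_bound'[OF lev step \<open>i \<ge> k\<close>] gprod_sym by metis
  moreover have "gprod E c (y k) (y j) \<ge> real m1 + real k - CC B"
    using chain_bound'[OF lev' step' \<open>j \<ge> k\<close>] .
  moreover have "gprod E c (x k) (y k) \<ge> real m1 + real k - real R / 2"
  proof -
    have "real (gdist E (x k) c) \<ge> real m1 + real k" using lev[of k] by (metis of_nat_add of_nat_le_iff)
    moreover have "real (gdist E (y k) c) \<ge> real m1 + real k" using lev'[of k] by (metis of_nat_add of_nat_le_iff)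
    moreover have "real (gdist E (x k) (y k)) \<le> real R" using R by simp
    ultimately show ?thesis unfolding gprod_def by (simp add: field_simps)
  qed
  moreover have "CC B \<ge> 0" unfolding CC_def using delta_nonneg by simp
  ultimately have "real m1 + real k - CC B - real R / 2 \<le> min (gprod E c (x i) (x k)) (min (gprod E c (x k) (y k)) (gprod E c (y k) (y j)))"
    by simp
  then show ?thesis using F by linarith
qed

lemma chain_conv:
  assumes lev: "\<And>k. gdist E (x k) c \<ge> m1 + k" and step: "\<And>k. gdist E (x k) (x (Suc k)) \<le> B"
  shows "conv_inf E w x"
  unfolding conv_inf_def
proof
  fix M :: real
  obtain N :: nat where N: "real N \<ge> M + CC B + gdist E c w" by (meson real_arch_simple)
  have "gprod E w (x i) (x j) \<ge> M" if "i \<ge> N" "j \<ge> N" for i j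
  proof -
    have "gprod E c (x i) (x j) \<ge> real m1 + real N - CC B"
    proof (cases "i \<le> j")
      case True
      then show ?thesis using chain_bound'[OF lev step True] that by simp
    next
      case False
      then show ?thesis using chain_bound'[OF lev step, of j i] that gprod_sym by fastforce
    qed
    then show ?thesis using gprod_base[of c "x i" "x j" w] N by simp
  qed
  then show "\<exists>N. \<forall>i\<ge>N. \<forall>j\<ge>N. M \<le> gprod E w (x i) (x j)" by blast
qed

end



context hgraph begin

lemma ray_lvl: "geodesic_ray E \<gamma> \<Longrightarrow> \<gamma> 0 = c \<Longrightarrow> gdist E (\<gamma> i) c = i"
  unfolding geodesic_ray_def by (metis le0 minus_nat.diff_0 if_P order_refl gdist_sym)

lemma ray_dist: "geodesic_ray E \<gamma> \<Longrightarrow> i \<le> j \<Longrightarrow> gdist E (\<gamma> i) (\<gamma> j) = j - i"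
  unfolding geodesic_ray_def by simp

lemma ray_edge: "geodesic_ray E \<gamma> \<Longrightarrow> E (\<gamma> k) (\<gamma> (Suc k))"
  using ray_dist[of \<gamma> k "Suc k"] gdist_one by simp

lemma ray_gprod: "geodesic_ray E \<gamma> \<Longrightarrow> \<gamma> 0 = c \<Longrightarrow> i \<le> j \<Longrightarrow> gprod E c (\<gamma> i) (\<gamma> j) = i"
  unfolding gprod_def using ray_lvl ray_dist by (simp add: of_nat_diff)

lemma ray_mono1:
  assumes "geodesic_ray E \<gamma>" "\<gamma> 0 = c" "i \<le> i'"
  shows "gprod E c (\<gamma> i) y \<le> gprod E c (\<gamma> i') y"
proof -
  have "real (gdist E (\<gamma> i') y) \<le> real (gdist E (\<gamma> i') (\<gamma> i)) + real (gdist E (\<gamma> i) y)" by (rule rtri)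
  moreover have "real (gdist E (\<gamma> i') (\<gamma> i)) = real i' - real i"
    using ray_dist[OF assms(1) assms(3)] gdist_sym assms(3) by (simp add: of_nat_diff)
  ultimately show ?thesis unfolding gprod_def using ray_lvl[OF assms(1,2)] by simp
qed

lemma ray_mono2:
  assumes "geodesic_ray E \<gamma>" "\<gamma> 0 = c" "i \<le> i'"
  shows "gprod E c y (\<gamma> i) \<le> gprod E c y (\<gamma> i')"
  using ray_mono1[OF assms] gprod_sym by metis

lemma rays_equiv:
  assumes r: "geodesic_ray E \<gamma>" "\<gamma> 0 = c" "geodesic_ray E \<gamma>'" "\<gamma>' 0 = c"
    and T: "\<And>k. gdist E (\<gamma> k) (\<gamma>' k) \<le> T"
  shows "seq_equiv E c \<gamma> \<gamma>'"
  unfolding seq_equiv_def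
proof
  fix M :: real
  obtain N :: nat where N: "real N \<ge> M + real T / 2" by (meson real_arch_simple)
  have "gprod E c (\<gamma> i) (\<gamma>' j) \<ge> M" if "i \<ge> N" "j \<ge> N" for i j
  proof -
    have "gprod E c (\<gamma> N) (\<gamma>' N) \<ge> real N - real T / 2"
      unfolding gprod_def using ray_lvl[OF r(1,2)] ray_lvl[OF r(3,4)] T[of N] by simp
    moreover have "gprod E c (\<gamma> N) (\<gamma>' N) \<le> gprod E c (\<gamma> i) (\<gamma>' N)" using ray_mono1[OF r(1,2) that(1)] .
    moreover have "gprod E c (\<gamma> i) (\<gamma>' N) \<le> gprod E c (\<gamma> i) (\<gamma>' j)" using ray_mono2[OF r(3,4) that(2)] .
    ultimately show ?thesis using N by linarith
  qed
  then show "\<exists>N. \<forall>i\<ge>N. \<forall>j\<ge>N. M \<le> gprod E c (\<gamma> i) (\<gamma>' j)" by blast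
qed

lemma equiv_eventually:
  assumes "seq_equiv E w s t"
  shows "\<exists>N. \<forall>i\<ge>N. \<forall>j\<ge>N. gprod E w (s i) (t j) \<ge> M"
  using assms unfolding seq_equiv_def by blast

lemma bprod_bound:
  assumes xi: "\<xi> \<in> gromov_boundary E c" and eta: "\<eta> \<in> gromov_boundary E c"
    and r: "geodesic_ray E \<gamma>" "\<gamma> 0 = c" "geodesic_ray E \<gamma>'" "\<gamma>' 0 = c"
    and g: "\<gamma> \<in> \<xi>" "\<gamma>' \<in> \<eta>"
    and big: "real (gdist E (\<gamma> n) (\<gamma>' n)) > 4 * \<delta> + 4"
  shows "bprod E w \<xi> \<eta> \<le> ereal (real n + gdist E c w + 4 * \<delta>)"
proof (rule bprod_le)
  fix s t assume st: "s \<in> \<xi>" "t \<in> \<eta>"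
  let ?M0 = "real n + gdist E c w + 4 * \<delta>"
  show "dliminf E w s t \<le> ereal ?M0"
  proof (rule ccontr)
    assume "\<not> dliminf E w s t \<le> ereal ?M0"
    then have "dliminf E w s t > ereal ?M0" by simp
    then obtain N1 where N1: "\<forall>i\<ge>N1. \<forall>j\<ge>N1. gprod E w (s i) (t j) > ?M0"
      using dliminf_gt by blast
    have "\<xi> = cls E c s" "\<xi> = cls E c \<gamma>" using boundary_mem[OF xi] st g by auto
    then have "\<gamma> \<in> cls E c s" using in_cls boundary_mem[OF xi g(1)] by metis
    then have e1: "seq_equiv E c \<gamma> s" unfolding cls_def using equiv_sym by blast
    have "\<eta> = cls E c t" "\<eta> = cls E c \<gamma>'" using boundary_mem[OF eta] st g by auto
    then have "\<gamma>' \<in> cls E c t" using in_cls boundary_mem[OF eta g(2)] by metis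
    then have e2: "seq_equiv E c t \<gamma>'" unfolding cls_def by blast
    obtain N2 where N2: "\<forall>i\<ge>N2. \<forall>j\<ge>N2. gprod E c (\<gamma> i) (s j) \<ge> ?M0"
      using equiv_eventually[OF e1] by blast
    obtain N3 where N3: "\<forall>i\<ge>N3. \<forall>j\<ge>N3. gprod E c (t i) (\<gamma>' j) \<ge> ?M0"
      using equiv_eventually[OF e2] by blast
    define K where "K = max (max N1 N2) (max N3 n)"
    have K: "K \<ge> N1" "K \<ge> N2" "K \<ge> N3" "K \<ge> n" unfolding K_def by auto
    have "gprod E c (\<gamma> K) (\<gamma>' K) \<ge> min (gprod E c (\<gamma> K) (s K)) (min (gprod E c (s K) (t K)) (gprod E c (t K) (\<gamma>' K))) - 2 * \<delta>"
      by (rule fourpt2)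
    moreover have "gprod E c (s K) (t K) \<ge> ?M0 - gdist E c w"
      using N1 K gprod_base[of w "s K" "t K" c] gdist_sym[of c w] by fastforce
    moreover have "gprod E c (\<gamma> K) (s K) \<ge> ?M0" using N2 K by simp
    moreover have "gprod E c (t K) (\<gamma>' K) \<ge> ?M0" using N3 K by simp
    ultimately have gK: "gprod E c (\<gamma> K) (\<gamma>' K) \<ge> real n + 2 * \<delta>" by simp
    have "gprod E c (\<gamma> n) (\<gamma>' n) \<ge> min (gprod E c (\<gamma> n) (\<gamma> K)) (min (gprod E c (\<gamma> K) (\<gamma>' K)) (gprod E c (\<gamma>' K) (\<gamma>' n))) - 2 * \<delta>"
      by (rule fourpt2)
    moreover have "gprod E c (\<gamma> n) (\<gamma> K) = n" using ray_gprod[OF r(1,2) K(4)] .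
    moreover have "gprod E c (\<gamma>' K) (\<gamma>' n) = n" using ray_gprod[OF r(3,4) K(4)] gprod_sym by metis
    ultimately have "gprod E c (\<gamma> n) (\<gamma>' n) \<ge> real n - 2 * \<delta>" using gK delta_nonneg by simp
    moreover have "gprod E c (\<gamma> n) (\<gamma>' n) = real n - real (gdist E (\<gamma> n) (\<gamma>' n)) / 2"
      unfolding gprod_def using ray_lvl[OF r(1,2)] ray_lvl[OF r(3,4)] by simp
    ultimately show False using big by simp
  qed
qed

end



definition spath :: "('v \<Rightarrow> 'v \<Rightarrow> bool) \<Rightarrow> 'v list \<Rightarrow> bool" where
  "spath E xs \<longleftrightarrow> xs \<noteq> [] \<and> (\<forall>i. Suc i < length xs \<longrightarrow> gdist E (xs ! i) (xs ! Suc i) \<le> 1)"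

lemma spath_single[simp]: "spath E [x]" by (simp add: spath_def)

lemma spath_Cons2: "spath E (x # y # xs) \<longleftrightarrow> gdist E x y \<le> 1 \<and> spath E (y # xs)"
  unfolding spath_def by (auto simp: less_Suc_eq_0_disj)

lemma spath_Cons: "spath E (x # xs) \<longleftrightarrow> (xs = [] \<or> (gdist E x (hd xs) \<le> 1 \<and> spath E xs))"
  by (cases xs) (auto simp: spath_Cons2)

lemma spath_append:
  assumes "spath E xs" "spath E ys" "gdist E (last xs) (hd ys) \<le> 1"
  shows "spath E (xs @ ys)"
  using assms
proof (induction xs)
  case Nil then show ?case by (simp add: spath_def)
next
  case (Cons a xs)
  show ?case
  proof (cases xs)
    case Nil
    with Cons.prems show ?thesis by (simp add: spath_Cons)
  next
    case (Cons b zs)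
    with Cons.prems Cons.IH show ?thesis by (auto simp: spath_Cons2)
  qed
qed

lemma spath_butlast: "spath E xs \<Longrightarrow> length xs \<ge> 2 \<Longrightarrow> spath E (butlast xs)"
proof -
  assume a: "spath E xs" "length xs \<ge> 2"
  then have "butlast xs \<noteq> []" by (cases xs rule: rev_cases) auto
  moreover have "gdist E (butlast xs ! i) (butlast xs ! Suc i) \<le> 1" if "Suc i < length (butlast xs)" for i
    using a(1) that unfolding spath_def by (simp add: nth_butlast)
  ultimately show ?thesis unfolding spath_def by blast
qed

context cgraph begin

lemma path_spath: "is_path E xs \<Longrightarrow> spath E xs"
  unfolding is_path_def spath_def using gdist_edge by fastforce

lemma spath_gdist:
  assumes "spath E xs" "i + k < length xs"
  shows "gdist E (xs ! i) (xs ! (i + k)) \<le> k"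
  using assms
proof (induction k)
  case 0 then show ?case by simp
next
  case (Suc k)
  have "gdist E (xs ! i) (xs ! (i + k)) \<le> k" using Suc by simp
  moreover have "gdist E (xs ! (i + k)) (xs ! Suc (i + k)) \<le> 1" using Suc.prems unfolding spath_def by auto
  ultimately show ?case using gdist_tri[of "xs ! i" "xs ! Suc (i + k)" "xs ! (i + k)"] by simp
qed

lemma spath_gdist':
  assumes "spath E xs" "i < length xs" "j < length xs"
  shows "gdist E (xs ! i) (xs ! j) \<le> length xs"
proof (cases "i \<le> j")
  case True
  then show ?thesis using spath_gdist[OF assms(1), of i "j - i"] assms by simp
next
  case False
  then show ?thesis using spath_gdist[OF assms(1), of j "i - j"] assms gdist_sym[of "xs!i" "xs!j"] by simp
qed

end

locale setting = hgraph +
  fixes c :: 'a and D :: real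
  assumes outward: "\<forall>v. \<exists>u. E v u \<and> gdist E u c = gdist E v c + 1"
    and Dpos: "D > 0"
    and cond3: "\<forall>r::nat. \<forall>z x y. gdist E z c = r \<and>
        gdist E x c = r + 1 \<and> gdist E x z \<le> 1 \<and>
        gdist E y c = r + 1 \<and> gdist E y z \<le> 1 \<longrightarrow>
        (\<exists>xs. is_path E xs \<and> hd xs = x \<and> last xs = y \<and>
           (\<forall>i<length xs. gdist E (xs ! i) c > r \<and> real (gdist E (xs ! i) x) \<le> D))"
    and cond4: "\<forall>r::nat. \<forall>x y. gdist E x c = r \<and> gdist E y c = r \<and> E x y \<longrightarrow>
        (\<exists>xs. is_path E xs \<and> length xs \<ge> 3 \<and> hd xs = x \<and> last xs = y \<and>
           (\<forall>i. 0 < i \<and> i < length xs - 1 \<longrightarrow>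
              gdist E (xs ! i) c > r \<and> real (gdist E (xs ! i) x) \<le> D))"
begin

definition ok :: "nat \<Rightarrow> 'a \<Rightarrow> 'a \<Rightarrow> bool" where
  "ok m v u \<longleftrightarrow> (gdist E v c = m \<and> gdist E u v \<le> 1 \<and> gdist E u c = Suc m) \<or> (gdist E v c > m \<and> u = v)"

lemma lvl_adj: "gdist E x y \<le> 1 \<Longrightarrow> gdist E x c \<le> gdist E y c + 1"
  using gdist_tri[of x c y] by simp

lemma c3:
  assumes "gdist E z c = r" "gdist E x c = Suc r" "gdist E x z \<le> 1" "gdist E y c = Suc r" "gdist E y z \<le> 1"
  obtains xs where "spath E xs" "hd xs = x" "last xs = y"
    "\<And>v. v \<in> set xs \<Longrightarrow> gdist E v c \<ge> Suc r \<and> real (gdist E v z) \<le> D + 1"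
proof -
  obtain xs where xs: "is_path E xs" "hd xs = x" "last xs = y"
     "\<forall>i<length xs. gdist E (xs ! i) c > r \<and> real (gdist E (xs ! i) x) \<le> D"
    using cond3[rule_format, where r=r and z=z and x=x and y=y] assms by auto
  have "gdist E v c \<ge> Suc r \<and> real (gdist E v z) \<le> D + 1" if vin: "v \<in> set xs" for v
  proof -
    obtain i where "i < length xs" "v = xs ! i" using vin unfolding in_set_conv_nth by blast
    then have "gdist E v c > r" "real (gdist E v x) \<le> D" using xs(4) by auto
    moreover have "real (gdist E v z) \<le> real (gdist E v x) + real (gdist E x z)" by (rule rtri)
    ultimately show ?thesis using assms(3) by simp
  qed
  then show ?thesis using that path_spath xs by blast
qed

lemma ok_lvl: "ok m v u \<Longrightarrow> gdist E u c \<ge> Suc m \<and> gdist E u v \<le> 1"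
  unfolding ok_def by auto

lemma segment:
  assumes lv: "gdist E v c \<ge> m" and lw: "gdist E w c \<ge> m" and vw: "gdist E v w \<le> 1"
    and uv: "ok m v uv" and uw: "ok m w uw"
  shows "\<exists>P. spath E P \<and> hd P = uv \<and> last P = uw \<and>
      (\<forall>x\<in>set P. gdist E x c \<ge> Suc m \<and> real (gdist E x v) \<le> 2 * D + 2)"
proof (cases "v = w")
  case True
  show ?thesis
  proof (cases "gdist E v c = m")
    case lm: True
    have "gdist E uv c = Suc m" "gdist E uv v \<le> 1" "gdist E uw c = Suc m" "gdist E uw v \<le> 1"
      using uv uw True lm unfolding ok_def by auto
    then obtain P where "spath E P" "hd P = uv" "last P = uw"
      "\<And>x. x \<in> set P \<Longrightarrow> gdist E x c \<ge> Suc m \<and> real (gdist E x v) \<le> D + 1"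
      using c3[OF lm, of uv uw] by blast
    then show ?thesis using Dpos by force
  next
    case False
    then have "uv = v" "uw = v" using uv uw True unfolding ok_def by auto
    then show ?thesis using lv False Dpos by (intro exI[of _ "[v]"]) auto
  qed
next
  case vw_ne: False
  have Evw: "E v w" using vw vw_ne gdist_le1_cases by blast
  have lvw: "gdist E v c \<le> gdist E w c + 1" "gdist E w c \<le> gdist E v c + 1"
    using lvl_adj[of v w] lvl_adj[of w v] vw gdist_sym[of v w] by auto
  consider "gdist E v c = m" "gdist E w c = m" | "gdist E v c = m" "gdist E w c > m"
    | "gdist E v c > m" "gdist E w c = m" | "gdist E v c > m" "gdist E w c > m"
    using lv lw by linarith
  then show ?thesis
  proof cases
    case 1
    obtain Q where Q: "is_path E Q" "length Q \<ge> 3" "hd Q = v" "last Q = w"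
      "\<forall>i. 0 < i \<and> i < length Q - 1 \<longrightarrow> gdist E (Q ! i) c > m \<and> real (gdist E (Q ! i) v) \<le> D"
      using cond4[rule_format, where r=m and x=v and y=w] 1 Evw by auto
    let ?n = "length Q"
    let ?p = "Q ! 1" and ?q = "Q ! (?n - 2)"
    have Qne: "Q \<noteq> []" using Q(2) by auto
    have Q0: "Q ! 0 = v" using Q(3) hd_conv_nth[OF Qne] by simp
    have Qn: "Q ! (?n - 1) = w" using Q(4) last_conv_nth[OF Qne] by simp
    have "E (Q ! 0) (Q ! Suc 0)" using Q(1,2) unfolding is_path_def by simp
    then have Ep: "E v ?p" using Q0 by simp
    have "E (Q ! (?n - 2)) (Q ! Suc (?n - 2))" using Q(1,2) unfolding is_path_def by simp
    moreover have "Suc (?n - 2) = ?n - 1" using Q(2) by simp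
    ultimately have Eq: "E ?q w" using Qn by simp
    have pi: "gdist E ?p c > m" "real (gdist E ?p v) \<le> D" using Q(2) Q(5)[rule_format, of 1] by auto
    have qi: "gdist E ?q c > m" "real (gdist E ?q v) \<le> D" using Q(2) Q(5)[rule_format, of "?n - 2"] by auto
    have "gdist E ?p v = 1" using gdist_edge[OF Ep] gdist_sym[of ?p v] by simp
    then have pl: "gdist E ?p c = Suc m" using pi lvl_adj[of ?p v] 1 by simp
    have ql: "gdist E ?q c = Suc m" using qi lvl_adj[of ?q w] gdist_edge[OF Eq] 1 by simp
    have uv': "gdist E uv c = Suc m" "gdist E uv v \<le> 1" using uv 1 unfolding ok_def by auto
    have uw': "gdist E uw c = Suc m" "gdist E uw w \<le> 1" using uw 1 unfolding ok_def by auto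
    obtain Q1 where Q1: "spath E Q1" "hd Q1 = uv" "last Q1 = ?p"
      "\<And>x. x \<in> set Q1 \<Longrightarrow> gdist E x c \<ge> Suc m \<and> real (gdist E x v) \<le> D + 1"
      using c3[OF 1(1) uv' pl, of thesis] gdist_edge[OF Ep] gdist_sym[of v ?p] by simp
    obtain Q3 where Q3: "spath E Q3" "hd Q3 = ?q" "last Q3 = uw"
      "\<And>x. x \<in> set Q3 \<Longrightarrow> gdist E x c \<ge> Suc m \<and> real (gdist E x w) \<le> D + 1"
      using c3[OF 1(2) ql _ uw', of thesis] gdist_edge[OF Eq] by simp
    let ?mid = "take (?n - 2) (drop 1 Q)"
    have midlen: "length ?mid = ?n - 2" using Q(2) by simp
    have midnth: "?mid ! k = Q ! Suc k" if "k < ?n - 2" for k using that Q(2) by simp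
    have mid_sp: "spath E ?mid"
      using path_spath[OF is_path_take[OF is_path_drop[OF Q(1)]]] Q(2) by simp
    have mid_hd: "hd ?mid = ?p" using midnth[of 0] Q(2) by (simp add: hd_conv_nth)
    have mid_last: "last ?mid = ?q"
    proof -
      have "last ?mid = ?mid ! (?n - 3)" using midlen Q(2) by (simp add: last_conv_nth)
      also have "\<dots> = Q ! Suc (?n - 3)" using midnth Q(2) by simp
      also have "Suc (?n - 3) = ?n - 2" using Q(2) by simp
      finally show ?thesis .
    qed
    have mid_in: "gdist E x c \<ge> Suc m \<and> real (gdist E x v) \<le> D" if xin: "x \<in> set ?mid" for x
    proof -
      obtain k where k: "k < length ?mid" "x = ?mid ! k" using xin unfolding in_set_conv_nth by blast
      then have "k < ?n - 2" using midlen by simp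
      then have "Suc k < ?n - 1" by linarith
      then show ?thesis using Q(5)[rule_format, of "Suc k"] midnth k \<open>k < ?n - 2\<close> by auto
    qed
    have A: "spath E (?mid @ Q3)"
      using spath_append[OF mid_sp Q3(1)] mid_last Q3(2) by simp
    have "length ?mid \<ge> 1" using midlen Q(2) by linarith
    then have "?mid \<noteq> []" by (metis list.size(3) not_one_le_zero)
    then have "hd (?mid @ Q3) = ?p" using mid_hd by simp
    then have P: "spath E (Q1 @ ?mid @ Q3)"
      using spath_append[OF Q1(1) A] Q1(3) by simp
    have hdP: "hd (Q1 @ ?mid @ Q3) = uv" using Q1 unfolding spath_def by simp
    have lastP: "last (Q1 @ ?mid @ Q3) = uw" using Q3 unfolding spath_def by simp
    have inP: "gdist E x c \<ge> Suc m \<and> real (gdist E x v) \<le> 2 * D + 2" if xin: "x \<in> set (Q1 @ ?mid @ Q3)" for x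
    proof -
      consider "x \<in> set Q1" | "x \<in> set ?mid" | "x \<in> set Q3" using xin by auto
      then show ?thesis
      proof cases
        case 1 then show ?thesis using Q1(4) Dpos by force
      next
        case 2 then show ?thesis using mid_in Dpos by force
      next
        case 3
        then have a: "gdist E x c \<ge> Suc m" "real (gdist E x w) \<le> D + 1" using Q3(4) by auto
        have "real (gdist E x v) \<le> real (gdist E x ?q) + real (gdist E ?q v)" by (rule rtri)
        moreover have "real (gdist E x ?q) \<le> real (gdist E x w) + real (gdist E w ?q)" by (rule rtri)
        moreover have "gdist E w ?q = 1" using gdist_edge[OF Eq] gdist_sym by metis
        ultimately show ?thesis using a qi by simp
      qed
    qed
    show ?thesis using P hdP lastP inP by blast
  next
    case 2
    have wl: "gdist E w c = Suc m" using 2 lvw by linarith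
    have "uw = w" using uw 2 unfolding ok_def by auto
    have uv': "gdist E uv c = Suc m" "gdist E uv v \<le> 1" using uv 2 unfolding ok_def by auto
    obtain P where "spath E P" "hd P = uv" "last P = w"
      "\<And>x. x \<in> set P \<Longrightarrow> gdist E x c \<ge> Suc m \<and> real (gdist E x v) \<le> D + 1"
      using c3[OF 2(1) uv' wl, of thesis] vw gdist_sym[of v w] by simp
    then show ?thesis using \<open>uw = w\<close> Dpos by force
  next
    case 3
    have vl: "gdist E v c = Suc m" using 3 lvw by linarith
    have "uv = v" using uv 3 unfolding ok_def by auto
    have uw': "gdist E uw c = Suc m" "gdist E uw w \<le> 1" using uw 3 unfolding ok_def by auto
    obtain P where P: "spath E P" "hd P = v" "last P = uw"
      "\<And>x. x \<in> set P \<Longrightarrow> gdist E x c \<ge> Suc m \<and> real (gdist E x w) \<le> D + 1"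
      using c3[OF 3(2) vl vw uw', of thesis] by simp
    have "real (gdist E x v) \<le> 2 * D + 2" if "x \<in> set P" for x
    proof -
      have "real (gdist E x v) \<le> real (gdist E x w) + real (gdist E w v)" by (rule rtri)
      then show ?thesis using P(4)[OF that] vw gdist_sym[of w v] Dpos by simp
    qed
    then show ?thesis using P \<open>uv = v\<close> by force
  next
    case 4
    have "uv = v" "uw = w" using uv uw 4 unfolding ok_def by auto
    moreover have "spath E [v, w]" using vw by (simp add: spath_Cons2)
    ultimately show ?thesis using 4 vw Dpos gdist_sym[of w v] by (intro exI[of _ "[v, w]"]) auto
  qed
qed

end



lemma spath_butlast_join:
  assumes "spath E X" "length X \<ge> 2" "spath E Y" "last X = hd Y"
  shows "spath E (butlast X @ Y)"
proof -
  have "spath E (butlast X)" using spath_butlast assms by blast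
  moreover have "gdist E (last (butlast X)) (hd Y) \<le> 1"
  proof -
    let ?n = "length X"
    have "gdist E (X ! (?n - 2)) (X ! Suc (?n - 2)) \<le> 1" using assms(1,2) unfolding spath_def by simp
    moreover have "Suc (?n - 2) = ?n - 1" using assms(2) by simp
    moreover have "last (butlast X) = X ! (?n - 2)"
    proof -
      have bne: "butlast X \<noteq> []" using assms(2) by (cases X rule: rev_cases) auto
      have "last (butlast X) = butlast X ! (length (butlast X) - 1)" using last_conv_nth[OF bne] .
      also have "\<dots> = X ! (?n - 2)" using assms(2) by (simp add: nth_butlast numeral_2_eq_2)
      finally show ?thesis .
    qed
    moreover have "last X = X ! (?n - 1)"
    proof -
      have "X \<noteq> []" using assms(2) by auto
      then show ?thesis by (simp add: last_conv_nth)
    qed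
    ultimately show ?thesis using assms(4) by simp
  qed
  ultimately show ?thesis using spath_append assms(3) by blast
qed

context setting begin

lemma ok_exists: "gdist E w c \<ge> m \<Longrightarrow> \<exists>u. ok m w u"
proof (cases "gdist E w c = m")
  case True
  obtain u where "E w u" "gdist E u c = gdist E w c + 1" using outward by blast
  then show ?thesis unfolding ok_def using True gdist_edge sym by (metis Suc_eq_plus1 order_refl)
next
  case False
  assume "gdist E w c \<ge> m"
  then show ?thesis using False unfolding ok_def by auto
qed

definition refine_ok where
  "refine_ok m L a b L' par \<longleftrightarrow> spath E L' \<and> (\<forall>x\<in>set L'. gdist E x c \<ge> Suc m) \<and> hd L' = a \<and> last L' = b \<and>
     (\<forall>j<length L'. par j < length L \<and> real (gdist E (L' ! j) (L ! par j)) \<le> 2 * D + 2) \<and>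
     par 0 = 0 \<and> par (length L' - 1) = length L - 1 \<and> (\<forall>i<length L. \<exists>j<length L'. par j = i)"

lemma refine:
  assumes "spath E L" "\<forall>x\<in>set L. gdist E x c \<ge> m" "ok m (hd L) a" "ok m (last L) b"
  shows "\<exists>L' par. refine_ok m L a b L' par"
  using assms
proof (induction L arbitrary: a)
  case Nil then show ?case by (simp add: spath_def)
next
  case (Cons v L0)
  show ?case
  proof (cases "L0 = []")
    case True
    have "ok m v a" "ok m v b" using Cons.prems True by auto
    moreover have "gdist E v c \<ge> m" using Cons.prems by simp
    ultimately obtain P where P: "spath E P" "hd P = a" "last P = b"
       "\<forall>x\<in>set P. gdist E x c \<ge> Suc m \<and> real (gdist E x v) \<le> 2 * D + 2"
      using segment[of m v v a b] by auto
    have Pne: "P \<noteq> []" using P(1) unfolding spath_def by simp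
    have "\<forall>j<length P. real (gdist E (P ! j) v) \<le> 2 * D + 2" using P(4) nth_mem by blast
    then have "refine_ok m (v # L0) a b P (\<lambda>_. 0)"
      unfolding refine_ok_def using P True Pne by auto
    then show ?thesis by blast
  next
    case False
    let ?w = "hd L0"
    have L0: "L0 = ?w # tl L0" using False by simp
    have sp0: "spath E L0" and vw: "gdist E v ?w \<le> 1" using Cons.prems(1) False spath_Cons[of E v L0] by auto
    have lv: "gdist E v c \<ge> m" and lw: "gdist E ?w c \<ge> m" using Cons.prems(2) False by auto
    obtain uw where uw: "ok m ?w uw" using ok_exists lw by blast
    have oka: "ok m v a" using Cons.prems by simp
    have okb: "ok m (last L0) b" using Cons.prems False by simp
    obtain L'' par'' where IH: "refine_ok m L0 uw b L'' par''"
      using Cons.IH[OF sp0 _ _ okb, of uw] Cons.prems(2) uw by auto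
    note IH' = IH[unfolded refine_ok_def]
    obtain P where P: "spath E P" "hd P = a" "last P = uw"
       "\<forall>x\<in>set P. gdist E x c \<ge> Suc m \<and> real (gdist E x v) \<le> 2 * D + 2"
      using segment[OF lv lw vw oka uw] by auto
    have Pne: "P \<noteq> []" using P(1) unfolding spath_def by simp
    have L''ne: "L'' \<noteq> []" using IH' unfolding spath_def by simp
    let ?X = "a # P"
    let ?L = "butlast ?X @ L''"
    let ?n1 = "length P"
    define par where "par j = (if j < ?n1 then 0 else Suc (par'' (j - ?n1)))" for j
    have spX: "spath E ?X" using P(1,2) Pne by (simp add: spath_Cons)
    have lenX: "length ?X \<ge> 2" using Pne by (cases P) auto
    have sp: "spath E ?L"
      using spath_butlast_join[OF spX lenX] IH' P(3) Pne by simp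
    have lenL: "length ?L = ?n1 + length L''" by simp
    have nthL: "?L ! j = (if j < ?n1 then ?X ! j else L'' ! (j - ?n1))" for j
    proof -
      have lb: "length (butlast ?X) = ?n1" by (simp del: butlast.simps)
      have "butlast ?X ! j = ?X ! j" if "j < ?n1"
        using that lb nth_butlast[of j ?X] by (simp del: butlast.simps)
      then show ?thesis using lb nth_append[of "butlast ?X" L'' j] by (simp del: butlast.simps)
    qed
    have a_lvl: "gdist E a c \<ge> Suc m" "gdist E a v \<le> 1" using ok_lvl[OF oka] by auto
    have setX: "set (butlast ?X) \<subseteq> set ?X" by (rule in_set_butlastD[THEN subsetI])
    have lev: "\<forall>x\<in>set ?L. gdist E x c \<ge> Suc m"
    proof
      fix x assume "x \<in> set ?L"
      then consider "x \<in> set ?X" | "x \<in> set L''" using setX by auto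
      then show "gdist E x c \<ge> Suc m" using a_lvl P(4) IH' by cases auto
    qed
    have hdL: "hd ?L = a" using Pne by (cases P) auto
    have lastL: "last ?L = b" using L''ne IH' by simp
    have bnd: "par j < length (v # L0) \<and> real (gdist E (?L ! j) ((v # L0) ! par j)) \<le> 2 * D + 2"
      if "j < length ?L" for j
    proof (cases "j < ?n1")
      case True
      then have pj: "par j = 0" unfolding par_def by simp
      have "real (gdist E (?X ! j) v) \<le> 2 * D + 2"
      proof (cases j)
        case 0 then show ?thesis using a_lvl Dpos by simp
      next
        case (Suc k)
        then have "?X ! j \<in> set P" using True by simp
        then show ?thesis using P(4) by blast
      qed
      then show ?thesis using pj nthL True by simp
    next
      case False
      then have j: "j - ?n1 < length L''" using that lenL by linarith
      then have "par'' (j - ?n1) < length L0 \<and> real (gdist E (L'' ! (j - ?n1)) (L0 ! par'' (j - ?n1))) \<le> 2 * D + 2"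
        using IH' by blast
      then show ?thesis using False nthL unfolding par_def by simp
    qed
    have p0: "par 0 = 0" unfolding par_def using Pne by simp
    have plast: "par (length ?L - 1) = length (v # L0) - 1"
    proof -
      have l1: "length L'' \<ge> 1" using L''ne by (cases L'') auto
      have "\<not> (length ?L - 1 < ?n1)" using l1 lenL by linarith
      moreover have "length ?L - 1 - ?n1 = length L'' - 1" using l1 lenL by linarith
      ultimately have "par (length ?L - 1) = Suc (par'' (length L'' - 1))" unfolding par_def by simp
      also have "\<dots> = Suc (length L0 - 1)" using IH' by simp
      also have "\<dots> = length (v # L0) - 1" using False by simp
      finally show ?thesis .
    qed
    have surj: "\<exists>j<length ?L. par j = i" if "i < length (v # L0)" for i
    proof (cases i)
      case 0 then show ?thesis using Pne p0 by (intro exI[of _ 0]) auto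
    next
      case (Suc k)
      then have "k < length L0" using that by simp
      then obtain j'' where "j'' < length L''" "par'' j'' = k" using IH' by blast
      then show ?thesis using Suc unfolding par_def by (intro exI[of _ "j'' + ?n1"]) auto
    qed
    have "refine_ok m (v # L0) a b ?L par"
      unfolding refine_ok_def using sp lev hdL lastL bnd p0 plast surj by blast
    then show ?thesis by blast
  qed
qed

end



context Metric_space begin

lemma chain_connectedin:
  assumes cpt: "compactin mtopology S"
    and ch: "\<And>e a b. e > 0 \<Longrightarrow> a \<in> S \<Longrightarrow> b \<in> S \<Longrightarrow> \<exists>ps. ps \<noteq> [] \<and> hd ps = a \<and> last ps = b \<and> set ps \<subseteq> S \<and>
              (\<forall>i. Suc i < length ps \<longrightarrow> d (ps ! i) (ps ! Suc i) < e)"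
  shows "connectedin mtopology S"
proof -
  have SM: "S \<subseteq> M" using compactin_subset_topspace[OF cpt] by simp
  show ?thesis unfolding connectedin
  proof (intro conjI)
    show "S \<subseteq> topspace mtopology" using SM by simp
    show "\<nexists>E1 E2. openin mtopology E1 \<and> openin mtopology E2 \<and> S \<subseteq> E1 \<union> E2 \<and> E1 \<inter> E2 \<inter> S = {} \<and> E1 \<inter> S \<noteq> {} \<and> E2 \<inter> S \<noteq> {}"
    proof
      assume "\<exists>E1 E2. openin mtopology E1 \<and> openin mtopology E2 \<and> S \<subseteq> E1 \<union> E2 \<and> E1 \<inter> E2 \<inter> S = {} \<and> E1 \<inter> S \<noteq> {} \<and> E2 \<inter> S \<noteq> {}"
      then obtain E1 E2 where o: "openin mtopology E1" "openin mtopology E2" and cov: "S \<subseteq> E1 \<union> E2"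
        and dis: "E1 \<inter> E2 \<inter> S = {}" and ne: "E1 \<inter> S \<noteq> {}" "E2 \<inter> S \<noteq> {}" by blast
      obtain a b where ab: "a \<in> E1" "a \<in> S" "b \<in> E2" "b \<in> S" using ne by blast
      obtain e where e: "e > 0" "\<forall>x\<in>S. \<exists>U\<in>{E1, E2}. mball x e \<subseteq> U"
        using lebesgue_number[OF cpt, of "{E1, E2}"] cov o by auto
      obtain ps where ps: "ps \<noteq> []" "hd ps = a" "last ps = b" "set ps \<subseteq> S"
          "\<forall>i. Suc i < length ps \<longrightarrow> d (ps ! i) (ps ! Suc i) < e"
        using ch[OF e(1) ab(2) ab(4)] by blast
      have "ps ! i \<in> E1" if "i < length ps" for i
        using that
      proof (induction i)
        case 0 then show ?case using ps ab by (simp add: hd_conv_nth)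
      next
        case (Suc i)
        have inS: "ps ! i \<in> S" "ps ! Suc i \<in> S" using ps(4) Suc.prems by auto
        then have inM: "ps ! i \<in> M" "ps ! Suc i \<in> M" using SM by auto
        have i1: "ps ! i \<in> E1" using Suc by simp
        obtain U where U: "U \<in> {E1, E2}" "mball (ps ! i) e \<subseteq> U" using e(2) inS by blast
        have "ps ! i \<in> mball (ps ! i) e" using inM e(1) by simp
        then have "ps ! i \<in> U" using U by blast
        then have "U = E1" using U(1) i1 inS dis by blast
        moreover have "ps ! Suc i \<in> mball (ps ! i) e" using inM ps(5) Suc.prems by simp
        ultimately show ?case using U by blast
      qed
      then have "b \<in> E1" using ps by (metis last_conv_nth diff_less length_greater_0_conv zero_less_one)
      then show False using ab dis by blast
    qed
  qed
qed

end



locale constr = setting +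
  fixes \<gamma> \<gamma>' :: "nat \<Rightarrow> 'a" and m1 :: nat and L0 :: "'a list"
  assumes r1: "geodesic_ray E \<gamma>" "\<gamma> 0 = c" and r2: "geodesic_ray E \<gamma>'" "\<gamma>' 0 = c"
    and L0: "spath E L0" "\<forall>x\<in>set L0. gdist E x c \<ge> m1" "hd L0 = \<gamma> m1" "last L0 = \<gamma>' m1"
begin

primrec chp where
  "chp 0 = (L0, \<lambda>_. 0)"
| "chp (Suc k) = (SOME p. refine_ok (m1 + k) (fst (chp k)) (\<gamma> (Suc (m1 + k))) (\<gamma>' (Suc (m1 + k))) (fst p) (snd p))"

definition "ch k = fst (chp k)"
definition "pa k = snd (chp (Suc k))"

lemma ray_ok:
  assumes "geodesic_ray E g" "g 0 = c"
  shows "ok j (g j) (g (Suc j))"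
proof -
  have "gdist E (g j) (g (Suc j)) = 1" using gdist_edge[OF ray_edge[OF assms(1)]] .
  then have "gdist E (g (Suc j)) (g j) \<le> 1" using gdist_sym[of "g j"] by simp
  then show ?thesis unfolding ok_def using ray_lvl[OF assms] by auto
qed

lemma inv: "spath E (ch k) \<and> (\<forall>x\<in>set (ch k). gdist E x c \<ge> m1 + k) \<and> hd (ch k) = \<gamma> (m1 + k) \<and> last (ch k) = \<gamma>' (m1 + k)"
proof (induction k)
  case 0 then show ?case using L0 unfolding ch_def by simp
next
  case (Suc k)
  have hl: "hd (ch k) = \<gamma> (m1 + k)" "last (ch k) = \<gamma>' (m1 + k)" using Suc by auto
  let ?P = "\<lambda>p. refine_ok (m1 + k) (ch k) (\<gamma> (Suc (m1 + k))) (\<gamma>' (Suc (m1 + k))) (fst p) (snd p)"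
  have "\<exists>L' par. refine_ok (m1 + k) (ch k) (\<gamma> (Suc (m1 + k))) (\<gamma>' (Suc (m1 + k))) L' par"
    using refine[of "ch k" "m1 + k"] Suc hl ray_ok[OF r1] ray_ok[OF r2] by auto
  then have ex: "\<exists>p. ?P p" by auto
  have "?P (chp (Suc k))" using someI_ex[OF ex] unfolding ch_def by simp
  then have "refine_ok (m1 + k) (ch k) (\<gamma> (Suc (m1 + k))) (\<gamma>' (Suc (m1 + k))) (ch (Suc k)) (pa k)"
    unfolding ch_def pa_def .
  then show ?case unfolding refine_ok_def by simp
qed

lemma ref: "refine_ok (m1 + k) (ch k) (\<gamma> (Suc (m1 + k))) (\<gamma>' (Suc (m1 + k))) (ch (Suc k)) (pa k)"
proof -
  have hl: "hd (ch k) = \<gamma> (m1 + k)" "last (ch k) = \<gamma>' (m1 + k)" using inv by auto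
  let ?P = "\<lambda>p. refine_ok (m1 + k) (ch k) (\<gamma> (Suc (m1 + k))) (\<gamma>' (Suc (m1 + k))) (fst p) (snd p)"
  have "\<exists>L' par. refine_ok (m1 + k) (ch k) (\<gamma> (Suc (m1 + k))) (\<gamma>' (Suc (m1 + k))) L' par"
    using refine[of "ch k" "m1 + k"] inv[of k] hl ray_ok[OF r1] ray_ok[OF r2] by auto
  then have ex: "\<exists>p. ?P p" by auto
  have "?P (chp (Suc k))" using someI_ex[OF ex] unfolding ch_def by simp
  then show ?thesis unfolding ch_def pa_def .
qed

lemma ch_ne: "ch k \<noteq> []" using inv[of k] unfolding spath_def by simp

definition branch :: "(nat \<Rightarrow> nat) \<Rightarrow> bool" where
  "branch b \<longleftrightarrow> (\<forall>k. b k < length (ch k) \<and> pa k (b (Suc k)) = b k)"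

definition "vx b k = ch k ! b k"

definition "Bn = nat \<lceil>2 * D + 2\<rceil>"

lemma branch_lvl: "branch b \<Longrightarrow> gdist E (vx b k) c \<ge> m1 + k"
  unfolding branch_def vx_def using inv[of k] nth_mem by blast

lemma branch_step: "branch b \<Longrightarrow> gdist E (vx b k) (vx b (Suc k)) \<le> Bn"
proof -
  assume b: "branch b"
  then have "b (Suc k) < length (ch (Suc k))" "pa k (b (Suc k)) = b k" unfolding branch_def by auto
  then have "real (gdist E (ch (Suc k) ! b (Suc k)) (ch k ! b k)) \<le> 2 * D + 2"
    using ref[of k] unfolding refine_ok_def by auto
  then have "real (gdist E (vx b k) (vx b (Suc k))) \<le> 2 * D + 2" unfolding vx_def using gdist_sym[of "ch k ! b k"] by simp
  then show ?thesis unfolding Bn_def by linarith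
qed

lemma branch_conv: "branch b \<Longrightarrow> conv_inf E w (vx b)"
  using chain_conv[of m1 "vx b" c Bn w] branch_lvl branch_step by blast

definition "X1 R w = CC Bn + real R / 2 + 2 * \<delta> + real (gdist E c w)"

lemma close:
  assumes b: "branch b" "branch b'" and R: "gdist E (vx b k) (vx b' k) \<le> R"
  shows "dliminf E w (vx b) (vx b') \<ge> ereal (real m1 + real k - X1 R w)"
proof (rule dliminf_ge[of k])
  show "\<forall>i\<ge>k. \<forall>j\<ge>k. real m1 + real k - X1 R w \<le> gprod E w (vx b i) (vx b' j)"
  proof (intro allI impI)
    fix i j assume "i \<ge> k" "j \<ge> k"
    then have "gprod E c (vx b i) (vx b' j) \<ge> real m1 + real k - CC Bn - real R / 2 - 2 * \<delta>"
      using two_chains[of m1 "vx b" c Bn "vx b'" k R i j] branch_lvl branch_step b R by blast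
    then show "real m1 + real k - X1 R w \<le> gprod E w (vx b i) (vx b' j)"
      using gprod_base[of c "vx b i" "vx b' j" w] unfolding X1_def by linarith
  qed
qed

definition "Kset = {cls E c (vx b) | b. branch b}"

lemma K_sub: "Kset \<subseteq> gromov_boundary E c"
  unfolding Kset_def using branch_conv boundary_cls by blast

lemma branch0: "branch (\<lambda>_. 0)"
  unfolding branch_def using ch_ne ref unfolding refine_ok_def by auto

lemma branch_last: "branch (\<lambda>k. length (ch k) - 1)"
  unfolding branch_def using ch_ne ref unfolding refine_ok_def by auto

lemma vx0: "vx (\<lambda>_. 0) k = \<gamma> (m1 + k)"
  unfolding vx_def using inv[of k] ch_ne[of k] by (simp add: hd_conv_nth)

lemma vxlast: "vx (\<lambda>k. length (ch k) - 1) k = \<gamma>' (m1 + k)"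
  unfolding vx_def using inv[of k] ch_ne[of k] by (simp add: last_conv_nth)

lemma shift_equiv:
  assumes "geodesic_ray E g" "g 0 = c"
  shows "seq_equiv E c g (\<lambda>k. g (m1 + k))"
  unfolding seq_equiv_def
proof
  fix M :: real
  obtain N :: nat where N: "real N \<ge> M" by (meson real_arch_simple)
  have "gprod E c (g i) (g (m1 + j)) \<ge> M" if "i \<ge> N" "j \<ge> N" for i j
  proof (cases "i \<le> m1 + j")
    case True then show ?thesis using ray_gprod[OF assms True] that N by simp
  next
    case False then show ?thesis using ray_gprod[OF assms, of "m1 + j" i] that N gprod_sym by fastforce
  qed
  then show "\<exists>N. \<forall>i\<ge>N. \<forall>j\<ge>N. M \<le> gprod E c (g i) (g (m1 + j))" by blast
qed

lemma cls_ray: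
  assumes "geodesic_ray E g" "g 0 = c" "\<xi> \<in> gromov_boundary E c" "g \<in> \<xi>"
  shows "\<xi> = cls E c (\<lambda>k. g (m1 + k))"
  using boundary_mem[OF assms(3,4)] cls_eq[OF shift_equiv[OF assms(1,2)]] by simp

lemma xi_in: "\<xi> \<in> gromov_boundary E c \<Longrightarrow> \<gamma> \<in> \<xi> \<Longrightarrow> \<xi> \<in> Kset"
proof -
  assume a: "\<xi> \<in> gromov_boundary E c" "\<gamma> \<in> \<xi>"
  have "vx (\<lambda>_. 0) = (\<lambda>k. \<gamma> (m1 + k))" using vx0 by (simp add: fun_eq_iff)
  then have "\<xi> = cls E c (vx (\<lambda>_. 0))" using cls_ray[OF r1 a] by simp
  then show ?thesis unfolding Kset_def using branch0 by blast
qed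

lemma eta_in: "\<eta> \<in> gromov_boundary E c \<Longrightarrow> \<gamma>' \<in> \<eta> \<Longrightarrow> \<eta> \<in> Kset"
proof -
  assume a: "\<eta> \<in> gromov_boundary E c" "\<gamma>' \<in> \<eta>"
  have "\<eta> = cls E c (vx (\<lambda>k. length (ch k) - 1))" proof -
    have "vx (\<lambda>k. length (ch k) - 1) = (\<lambda>k. \<gamma>' (m1 + k))" using vxlast by (simp add: fun_eq_iff)
    then show ?thesis using cls_ray[OF r2 a] by simp
  qed
  then show ?thesis unfolding Kset_def using branch_last by blast
qed

end



lemma small_exp:
  fixes \<epsilon> k2 e X :: real and m1 :: nat
  assumes "\<epsilon> > 0" "k2 > 0" "e > 0"
  shows "\<exists>N::nat. \<forall>n\<ge>N. k2 * exp (- \<epsilon> * (real m1 + real n - X)) < e"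
proof -
  obtain N :: nat where N: "real N > ln (k2 / e) / \<epsilon> + X" by (meson reals_Archimedean2)
  have "k2 * exp (- \<epsilon> * (real m1 + real n - X)) < e" if "n \<ge> N" for n
  proof -
    have "real m1 + real n - X > ln (k2 / e) / \<epsilon>" using N that by linarith
    then have "\<epsilon> * (real m1 + real n - X) > ln (k2 / e)" using assms(1) by (simp add: field_simps)
    then have "exp (- \<epsilon> * (real m1 + real n - X)) < exp (- ln (k2 / e))" by simp
    also have "\<dots> = e / k2" using assms by (simp add: ln_div exp_diff)
    finally show ?thesis using assms(2) by (simp add: field_simps)
  qed
  then show ?thesis by blast
qed

locale vconstr = constr +
  fixes w :: 'a and \<epsilon> k2 :: real and \<rho>
  assumes eps: "\<epsilon> > 0" and k2: "k2 > 0" and ms: "Metric_space (gromov_boundary E c) \<rho>"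
    and up: "\<forall>\<xi>\<in>gromov_boundary E c. \<forall>\<eta>\<in>gromov_boundary E c. \<rho> \<xi> \<eta> \<le> k2 * eexp_neg \<epsilon> (bprod E w \<xi> \<eta>)"
begin

lemma rho_close:
  assumes b: "branch b" "branch b'" and R: "gdist E (vx b k) (vx b' k) \<le> R"
  shows "\<rho> (cls E c (vx b)) (cls E c (vx b')) \<le> k2 * exp (- \<epsilon> * (real m1 + real k - X1 R w))"
proof -
  have m: "cls E c (vx b) \<in> gromov_boundary E c" "cls E c (vx b') \<in> gromov_boundary E c"
    using K_sub b unfolding Kset_def by auto
  have B: "bprod E w (cls E c (vx b)) (cls E c (vx b')) \<ge> dliminf E w (vx b) (vx b')"
    using bprod_ge[OF in_cls[OF branch_conv[OF b(1)]] in_cls[OF branch_conv[OF b(2)]]] .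
  have A: "dliminf E w (vx b) (vx b') \<ge> ereal (real m1 + real k - X1 R w)" using close[OF b R] .
  have "bprod E w (cls E c (vx b)) (cls E c (vx b')) \<ge> ereal (real m1 + real k - X1 R w)"
    using order_trans[OF A B] .
  then have "eexp_neg \<epsilon> (bprod E w (cls E c (vx b)) (cls E c (vx b'))) \<le> exp (- \<epsilon> * (real m1 + real k - X1 R w))"
    using eexp_upper eps by blast
  then have "k2 * eexp_neg \<epsilon> (bprod E w (cls E c (vx b)) (cls E c (vx b'))) \<le> k2 * exp (- \<epsilon> * (real m1 + real k - X1 R w))"
    using k2 by simp
  moreover have "\<rho> (cls E c (vx b)) (cls E c (vx b')) \<le> k2 * eexp_neg \<epsilon> (bprod E w (cls E c (vx b)) (cls E c (vx b')))"
    using up m by blast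
  ultimately show ?thesis by linarith
qed

primrec up where
  "up k j 0 = j"
| "up k j (Suc n) = pa (k - Suc n) (up k j n)"

definition "child k i = (SOME j. j < length (ch (Suc k)) \<and> pa k j = i)"

primrec dn where
  "dn k j 0 = j"
| "dn k j (Suc n) = child (k + n) (dn k j n)"

definition "bt k j i = (if i \<le> k then up k j (k - i) else dn k j (i - k))"

lemma child: "i < length (ch k) \<Longrightarrow> child k i < length (ch (Suc k)) \<and> pa k (child k i) = i"
proof -
  assume "i < length (ch k)"
  then have "\<exists>j. j < length (ch (Suc k)) \<and> pa k j = i" using ref[of k] unfolding refine_ok_def by blast
  then show ?thesis unfolding child_def by (rule someI_ex)
qed

lemma pa_lt: "j < length (ch (Suc k)) \<Longrightarrow> pa k j < length (ch k)"
  using ref[of k] unfolding refine_ok_def by blast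

lemma up_lt: "j < length (ch k) \<Longrightarrow> n \<le> k \<Longrightarrow> up k j n < length (ch (k - n))"
proof (induction n)
  case 0 then show ?case by simp
next
  case (Suc n)
  then have "up k j n < length (ch (Suc (k - Suc n)))" by (simp add: Suc_diff_Suc)
  then show ?case using pa_lt by simp
qed

lemma dn_lt: "j < length (ch k) \<Longrightarrow> dn k j n < length (ch (k + n))"
  by (induction n) (auto simp: child)

lemma bt_branch:
  assumes j: "j < length (ch k)"
  shows "branch (bt k j)" "bt k j k = j"
proof -
  show "bt k j k = j" unfolding bt_def by simp
  show "branch (bt k j)" unfolding branch_def
  proof
    fix i
    have lt: "bt k j i < length (ch i)"
    proof (cases "i \<le> k")
      case True then show ?thesis unfolding bt_def using up_lt[OF j, of "k - i"] by simp
    next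
      case False then show ?thesis unfolding bt_def using dn_lt[OF j, of "i - k"] by simp
    qed
    have pa: "pa i (bt k j (Suc i)) = bt k j i"
    proof (cases "Suc i \<le> k")
      case True
      then have "bt k j i = up k j (Suc (k - Suc i))" unfolding bt_def by (simp add: Suc_diff_Suc)
      also have "\<dots> = pa (k - Suc (k - Suc i)) (up k j (k - Suc i))" by simp
      also have "k - Suc (k - Suc i) = i" using True by simp
      finally show ?thesis unfolding bt_def using True by simp
    next
      case False
      then have i: "i \<ge> k" by simp
      have bi: "bt k j i = dn k j (i - k)" unfolding bt_def using i by (cases "i = k") auto
      have "bt k j (Suc i) = dn k j (Suc (i - k))" unfolding bt_def using False i by (simp add: Suc_diff_le)
      also have "\<dots> = child i (dn k j (i - k))" using i by simp
      finally show ?thesis using child[of "dn k j (i - k)" i] dn_lt[OF j, of "i - k"] bi i by simp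
    qed
    show "bt k j i < length (ch i) \<and> pa i (bt k j (Suc i)) = bt k j i" using lt pa by simp
  qed
qed

end



context vconstr begin

lemma X1_mono: "R \<le> R' \<Longrightarrow> X1 R w \<le> X1 R' w" unfolding X1_def by simp

lemma rho_close1:
  assumes b: "branch b" "branch b'" and R: "gdist E (vx b k) (vx b' k) \<le> 1"
  shows "\<rho> (cls E c (vx b)) (cls E c (vx b')) \<le> k2 * exp (- \<epsilon> * (real m1 + real k - X1 1 w))"
  using rho_close[OF b R] .

lemma K_compact: "compactin (Metric_space.mtopology (gromov_boundary E c) \<rho>) Kset"
  unfolding Metric_space.compactin_sequentially[OF ms]
proof (intro conjI allI impI)
  show "Kset \<subseteq> gromov_boundary E c" by (rule K_sub)
  fix \<sigma> :: "nat \<Rightarrow> _" assume rs: "range \<sigma> \<subseteq> Kset"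
  then have "\<forall>n. \<exists>b. branch b \<and> \<sigma> n = cls E c (vx b)" unfolding Kset_def by blast
  then obtain \<beta> where \<beta>: "\<forall>n. branch (\<beta> n) \<and> \<sigma> n = cls E c (vx (\<beta> n))" using choice[of "\<lambda>n b. branch b \<and> \<sigma> n = cls E c (vx b)"] by blast
  define P where "P N s \<longleftrightarrow> (\<forall>k. \<beta> (s k) N = \<beta> (s 0) N)" for N and s :: "nat \<Rightarrow> nat"
  interpret S: subseqs P
  proof
    fix N and s :: "nat \<Rightarrow> nat" assume "strict_mono s"
    let ?f = "\<lambda>k. \<beta> (s k) N"
    have "?f ` UNIV \<subseteq> {..<length (ch N)}" using \<beta> unfolding branch_def by auto
    then have "finite (?f ` UNIV)" using finite_subset by blast
    then obtain a0 where "\<not> finite {a \<in> UNIV. ?f a = ?f a0}" using pigeonhole_infinite[of UNIV ?f] by auto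
    then have inf: "infinite {a. ?f a = ?f a0}" by simp
    let ?r = "enumerate {a. ?f a = ?f a0}"
    have "strict_mono ?r" using strict_mono_enumerate[OF inf] .
    moreover have "?f (?r k) = ?f a0" for k using enumerate_in_set[OF inf, of k] by simp
    ultimately show "\<exists>r'. strict_mono r' \<and> P N (s \<circ> r')" unfolding P_def by (intro exI[of _ ?r]) auto
  qed
  have stable: "P n (s \<circ> r)" if "strict_mono r" "P n s" for r s n
    using that unfolding P_def comp_def by metis
  define d where "d = S.diagseq"
  have sd: "strict_mono d" unfolding d_def by (rule S.subseq_diagseq)
  have hold: "P N (d \<circ> (+) (Suc N))" for N unfolding d_def by (rule S.diagseq_holds) (rule stable)
  define \<beta>s where "\<beta>s N = \<beta> (d (Suc N)) N" for N
  have key: "\<beta> (d n) N = \<beta>s N" if "n \<ge> Suc N" for n N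
  proof -
    have "\<beta> (d (Suc N + (n - Suc N))) N = \<beta> (d (Suc N + 0)) N" using hold[of N] unfolding P_def by simp
    then show ?thesis unfolding \<beta>s_def using that by simp
  qed
  have bs: "branch \<beta>s" unfolding branch_def
  proof
    fix N
    have "\<beta>s N < length (ch N)" unfolding \<beta>s_def using \<beta> unfolding branch_def by blast
    moreover have "pa N (\<beta>s (Suc N)) = \<beta> (d (Suc (Suc N))) N"
      unfolding \<beta>s_def using \<beta> unfolding branch_def by blast
    moreover have "\<beta> (d (Suc (Suc N))) N = \<beta>s N" using key by simp
    ultimately show "\<beta>s N < length (ch N) \<and> pa N (\<beta>s (Suc N)) = \<beta>s N" by simp
  qed
  let ?l = "cls E c (vx \<beta>s)"
  have lK: "?l \<in> Kset" unfolding Kset_def using bs by blast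
  have "limitin (Metric_space.mtopology (gromov_boundary E c) \<rho>) (\<sigma> \<circ> d) ?l sequentially"
    unfolding Metric_space.limitin_metric[OF ms]
  proof (intro conjI allI impI)
    show "?l \<in> gromov_boundary E c" using lK K_sub by blast
    fix e :: real assume e: "e > 0"
    obtain N0 where N0: "\<forall>n\<ge>N0. k2 * exp (- \<epsilon> * (real m1 + real n - X1 0 w)) < e"
      using small_exp[OF eps k2 e] by blast
    have "(\<sigma> \<circ> d) n \<in> gromov_boundary E c \<and> \<rho> ((\<sigma> \<circ> d) n) ?l < e" if "n \<ge> Suc N0" for n
    proof -
      have bn: "branch (\<beta> (d n))" and sn: "\<sigma> (d n) = cls E c (vx (\<beta> (d n)))" using \<beta> by auto
      have "vx (\<beta> (d n)) N0 = vx \<beta>s N0" unfolding vx_def using key[OF that] by simp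
      then have "\<rho> (cls E c (vx (\<beta> (d n)))) ?l \<le> k2 * exp (- \<epsilon> * (real m1 + real N0 - X1 0 w))"
        using rho_close[OF bn bs, of N0 0] by simp
      moreover have "\<sigma> (d n) \<in> gromov_boundary E c" using rs K_sub by blast
      ultimately show ?thesis using N0 sn by fastforce
    qed
    then show "\<forall>\<^sub>F n in sequentially. (\<sigma> \<circ> d) n \<in> gromov_boundary E c \<and> \<rho> ((\<sigma> \<circ> d) n) ?l < e"
      unfolding eventually_sequentially by blast
  qed
  then show "\<exists>l r. l \<in> Kset \<and> strict_mono r \<and> limitin (Metric_space.mtopology (gromov_boundary E c) \<rho>) (\<sigma> \<circ> r) l sequentially"
    using lK sd by blast
qed

definition "chainK e a b \<longleftrightarrow> (\<exists>ps. ps \<noteq> [] \<and> hd ps = a \<and> last ps = b \<and> set ps \<subseteq> Kset \<and>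
              (\<forall>i. Suc i < length ps \<longrightarrow> \<rho> (ps ! i) (ps ! Suc i) < e))"

lemma chain_refl: "a \<in> Kset \<Longrightarrow> chainK e a a"
  unfolding chainK_def by (intro exI[of _ "[a]"]) auto

lemma chain_snoc:
  assumes "chainK e a b" "x \<in> Kset" "\<rho> b x < e"
  shows "chainK e a x"
proof -
  obtain ps where ps: "ps \<noteq> []" "hd ps = a" "last ps = b" "set ps \<subseteq> Kset"
    "\<forall>i. Suc i < length ps \<longrightarrow> \<rho> (ps ! i) (ps ! Suc i) < e" using assms(1) unfolding chainK_def by blast
  have "\<rho> ((ps @ [x]) ! i) ((ps @ [x]) ! Suc i) < e" if "Suc i < length (ps @ [x])" for i
  proof (cases "Suc i < length ps")
    case True then show ?thesis using ps(5) by (simp add: nth_append)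
  next
    case False
    then have "i = length ps - 1" "Suc i = length ps" using that by auto
    then show ?thesis using assms(3) ps(1,3) by (simp add: nth_append last_conv_nth)
  qed
  then show ?thesis unfolding chainK_def using ps assms(2) by (intro exI[of _ "ps @ [x]"]) auto
qed

lemma chain_rev:
  assumes "chainK e a b" shows "chainK e b a"
proof -
  obtain ps where ps: "ps \<noteq> []" "hd ps = a" "last ps = b" "set ps \<subseteq> Kset"
    "\<forall>i. Suc i < length ps \<longrightarrow> \<rho> (ps ! i) (ps ! Suc i) < e" using assms(1) unfolding chainK_def by blast
  have "\<rho> (rev ps ! i) (rev ps ! Suc i) < e" if "Suc i < length (rev ps)" for i
  proof -
    let ?n = "length ps"
    have "\<rho> (ps ! (?n - Suc (Suc i))) (ps ! Suc (?n - Suc (Suc i))) < e" using ps(5) that by simp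
    moreover have "Suc (?n - Suc (Suc i)) = ?n - Suc i" using that by simp
    moreover have "rev ps ! i = ps ! (?n - Suc i)" "rev ps ! Suc i = ps ! (?n - Suc (Suc i))"
      using that by (auto simp: rev_nth)
    ultimately show ?thesis using Metric_space.commute[OF ms] by metis
  qed
  then show ?thesis unfolding chainK_def using ps by (intro exI[of _ "rev ps"]) (auto simp: hd_rev last_rev)
qed

lemma chain_exists:
  assumes b: "branch b" "branch b'" and e: "e > 0"
  shows "chainK e (cls E c (vx b)) (cls E c (vx b'))"
proof -
  obtain N where N: "k2 * exp (- \<epsilon> * (real m1 + real N - X1 1 w)) < e"
    using small_exp[OF eps k2 e] by blast
  have sp: "spath E (ch N)" using inv by blast
  have cK: "cls E c (vx b0) \<in> Kset" if "branch b0" for b0 unfolding Kset_def using that by blast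
  have near: "\<rho> (cls E c (vx b1)) (cls E c (vx b2)) < e"
    if "branch b1" "branch b2" "gdist E (vx b1 N) (vx b2 N) \<le> 1" for b1 b2
    using rho_close1[OF that] N by linarith
  have mid: "j < length (ch N) \<longrightarrow> chainK e (cls E c (vx b0)) (cls E c (vx (bt N j)))"
    if b0: "branch b0" and j: "b0 N \<le> j" for b0 j
    using j
  proof (induction j rule: dec_induct)
    case base
    show ?case
    proof
      assume lt: "b0 N < length (ch N)"
      have "vx (bt N (b0 N)) N = vx b0 N" unfolding vx_def using bt_branch[OF lt] by simp
      then show "chainK e (cls E c (vx b0)) (cls E c (vx (bt N (b0 N))))"
        using chain_snoc[OF chain_refl[OF cK[OF b0]] cK[OF bt_branch(1)[OF lt]]] near[OF b0 bt_branch(1)[OF lt]] by simp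
    qed
  next
    case (step n)
    show ?case
    proof
      assume lt: "Suc n < length (ch N)"
      then have lt': "n < length (ch N)" by simp
      have c1: "chainK e (cls E c (vx b0)) (cls E c (vx (bt N n)))" using step lt' by simp
      have "gdist E (ch N ! n) (ch N ! Suc n) \<le> 1" using sp lt unfolding spath_def by blast
      moreover have "vx (bt N n) N = ch N ! n" "vx (bt N (Suc n)) N = ch N ! Suc n"
        unfolding vx_def using bt_branch(2)[OF lt] bt_branch(2)[OF lt'] by auto
      ultimately have "gdist E (vx (bt N n) N) (vx (bt N (Suc n)) N) \<le> 1" by simp
      then show "chainK e (cls E c (vx b0)) (cls E c (vx (bt N (Suc n))))"
        using chain_snoc[OF c1 cK[OF bt_branch(1)[OF lt]]] near[OF bt_branch(1)[OF lt'] bt_branch(1)[OF lt]] by simp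
    qed
  qed
  have fin: "chainK e (cls E c (vx b1)) (cls E c (vx b2))" if b12: "branch b1" "branch b2" "b1 N \<le> b2 N" for b1 b2
  proof -
    have lt: "b2 N < length (ch N)" using b12 unfolding branch_def by blast
    have c1: "chainK e (cls E c (vx b1)) (cls E c (vx (bt N (b2 N))))" using mid[OF b12(1,3)] lt by simp
    have "vx (bt N (b2 N)) N = vx b2 N" unfolding vx_def using bt_branch[OF lt] by simp
    then show ?thesis using chain_snoc[OF c1 cK[OF b12(2)]] near[OF bt_branch(1)[OF lt] b12(2)] by simp
  qed
  show ?thesis
  proof (cases "b N \<le> b' N")
    case True then show ?thesis using fin b by blast
  next
    case False then show ?thesis using fin[OF b(2) b(1)] chain_rev by simp
  qed
qed

lemma K_connected: "connectedin (Metric_space.mtopology (gromov_boundary E c) \<rho>) Kset"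
proof (rule Metric_space.chain_connectedin[OF ms K_compact])
  fix e a b assume e: "(e::real) > 0" and ab: "a \<in> Kset" "b \<in> Kset"
  then obtain b1 b2 where "branch b1" "branch b2" "a = cls E c (vx b1)" "b = cls E c (vx b2)"
    unfolding Kset_def by blast
  then have "chainK e a b" using chain_exists e by simp
  then show "\<exists>ps. ps \<noteq> [] \<and> hd ps = a \<and> last ps = b \<and> set ps \<subseteq> Kset \<and> (\<forall>i. Suc i < length ps \<longrightarrow> \<rho> (ps ! i) (ps ! Suc i) < e)"
    unfolding chainK_def .
qed

lemma K_diam:
  assumes "a \<in> Kset" "b \<in> Kset"
  shows "\<rho> a b \<le> k2 * exp (- \<epsilon> * (real m1 - (CC (nat \<lceil>2 * D + 2\<rceil>) + real (length L0) / 2 + 2 * \<delta> + real (gdist E c w))))"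
proof -
  obtain b1 b2 where b: "branch b1" "branch b2" "a = cls E c (vx b1)" "b = cls E c (vx b2)"
    using assms unfolding Kset_def by blast
  have "b1 0 < length L0" "b2 0 < length L0" using b unfolding branch_def ch_def by (auto dest: spec[of _ 0])
  then have "gdist E (vx b1 0) (vx b2 0) \<le> length L0" unfolding vx_def ch_def using spath_gdist'[OF L0(1)] by simp
  from rho_close[OF b(1,2) this] show ?thesis using b unfolding X1_def Bn_def by simp
qed

end



context setting begin

lemma spath_rev:
  assumes "spath E xs" shows "spath E (rev xs)"
  unfolding spath_def
proof (intro conjI allI impI)
  show "rev xs \<noteq> []" using assms unfolding spath_def by simp
  fix i assume i: "Suc i < length (rev xs)"
  let ?n = "length xs"
  have a: "rev xs ! i = xs ! (?n - Suc i)" "rev xs ! Suc i = xs ! (?n - Suc (Suc i))"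
    using i by (auto simp: rev_nth)
  have "gdist E (xs ! (?n - Suc (Suc i))) (xs ! Suc (?n - Suc (Suc i))) \<le> 1"
    using assms i unfolding spath_def by auto
  moreover have "Suc (?n - Suc (Suc i)) = ?n - Suc i" using i by simp
  ultimately show "gdist E (rev xs ! i) (rev xs ! Suc i) \<le> 1" using a gdist_sym by metis
qed

lemma ray_spath:
  assumes "geodesic_ray E g" "g 0 = c" and ab: "a \<le> b"
  shows "spath E (map g [a..<Suc b])"
proof -
  have "gdist E (map g [a..<Suc b] ! i) (map g [a..<Suc b] ! Suc i) \<le> 1" if "Suc i < length (map g [a..<Suc b])" for i
  proof -
    have "map g [a..<Suc b] ! i = g (a + i)" "map g [a..<Suc b] ! Suc i = g (a + Suc i)" using that by (simp_all del: upt_Suc)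
    then show ?thesis using ray_dist[OF assms(1), of "a + i" "a + Suc i"] by simp
  qed
  then show ?thesis unfolding spath_def using ab by simp
qed

lemma init_chain:
  assumes r1: "geodesic_ray E \<gamma>" "\<gamma> 0 = c" and r2: "geodesic_ray E \<gamma>'" "\<gamma>' 0 = c"
    and h: "gdist E (\<gamma> p) (\<gamma>' p) \<le> T"
  shows "\<exists>L0. spath E L0 \<and> (\<forall>x\<in>set L0. gdist E x c \<ge> p - T) \<and> hd L0 = \<gamma> (p - T) \<and> last L0 = \<gamma>' (p - T) \<and> length L0 \<le> 3 * T + 3"
proof -
  let ?m = "p - T"
  let ?A = "map \<gamma> [?m..<Suc p]"
  let ?B = "rev (map \<gamma>' [?m..<Suc p])"
  obtain G where G: "is_path E G" "hd G = \<gamma> p" "last G = \<gamma>' p" "length G = Suc (gdist E (\<gamma> p) (\<gamma>' p))"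
    using gdist_ex by blast
  have spA: "spath E ?A" using ray_spath[OF r1, of ?m p] by simp
  have spB: "spath E ?B"
  proof -
    have "spath E (map \<gamma>' [?m..<Suc p])" using ray_spath[OF r2, of ?m p] by simp
    then show ?thesis by (rule spath_rev)
  qed
  have spG: "spath E G" using path_spath G(1) by blast
  have lenA: "length ?A \<le> T + 1" "?A \<noteq> []" by auto
  have lenB: "length ?B \<le> T + 1" "?B \<noteq> []" by auto
  have hdA: "hd ?A = \<gamma> ?m" by (simp del: upt_Suc add: upt_conv_Cons)
  have lastA: "last ?A = \<gamma> p" by (simp add: last_map)
  have hdB: "hd ?B = \<gamma>' p" by (simp add: hd_rev last_map)
  have lastB: "last ?B = \<gamma>' ?m" by (simp del: upt_Suc add: last_rev upt_conv_Cons)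
  have Gne: "G \<noteq> []" using G(4) by auto
  have sp1: "spath E (G @ ?B)" using spath_append[OF spG spB] G(3) hdB by simp
  have hdGB: "hd (G @ ?B) = \<gamma> p" using Gne G(2) by simp
  have sp: "spath E (?A @ G @ ?B)" using spath_append[OF spA sp1] lastA hdGB by simp
  have lev: "\<forall>x\<in>set (?A @ G @ ?B). gdist E x c \<ge> ?m"
  proof
    fix x assume "x \<in> set (?A @ G @ ?B)"
    then consider "x \<in> set ?A" | "x \<in> set G" | "x \<in> set ?B" by auto
    then show "gdist E x c \<ge> ?m"
    proof cases
      case 1 then show ?thesis using ray_lvl[OF r1] by auto
    next
      case 3 then show ?thesis using ray_lvl[OF r2] by auto
    next
      case 2
      then obtain i where i: "i < length G" "x = G ! i" by (auto simp: in_set_conv_nth)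
      have "gdist E (G ! 0) (G ! i) \<le> i" using path_gdist[OF G(1), of 0 i] i by simp
      moreover have "G ! 0 = \<gamma> p" using G(2) Gne by (simp add: hd_conv_nth)
      moreover have "i \<le> T" using i G(4) h by simp
      moreover have "gdist E (\<gamma> p) c \<le> gdist E (\<gamma> p) x + gdist E x c" by (rule gdist_tri)
      ultimately show ?thesis using ray_lvl[OF r1, of p] i by simp
    qed
  qed
  have "length (?A @ G @ ?B) \<le> 3 * T + 3" using lenA lenB G(4) h by simp
  moreover have "hd (?A @ G @ ?B) = \<gamma> ?m" using hdA lenA(2) by (simp del: upt_Suc)
  moreover have "last (?A @ G @ ?B) = \<gamma>' ?m" using lastB by simp
  ultimately show ?thesis using sp lev by blast
qed

end



theorem proposition2p2:
  fixes E :: "'v \<Rightarrow> 'v \<Rightarrow> bool" and c :: 'v and D :: real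
  assumes hyp: "gromov_hyperbolic_graph E"
    and rays: "\<forall>\<xi>\<in>gromov_boundary E c. \<exists>\<gamma>. geodesic_ray E \<gamma> \<and> \<gamma> 0 = c \<and> \<gamma> \<in> \<xi>"
    and outward: "\<forall>v. \<exists>u. E v u \<and> gdist E u c = gdist E v c + 1"
    and Dpos: "D > 0"
    and cond3: "\<forall>r::nat. \<forall>z x y. gdist E z c = r \<and>
        gdist E x c = r + 1 \<and> gdist E x z \<le> 1 \<and>
        gdist E y c = r + 1 \<and> gdist E y z \<le> 1 \<longrightarrow>
        (\<exists>xs. is_path E xs \<and> hd xs = x \<and> last xs = y \<and>
           (\<forall>i<length xs. gdist E (xs ! i) c > r \<and> real (gdist E (xs ! i) x) \<le> D))"
    and cond4: "\<forall>r::nat. \<forall>x y. gdist E x c = r \<and> gdist E y c = r \<and> E x y \<longrightarrow>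
        (\<exists>xs. is_path E xs \<and> length xs \<ge> 3 \<and> hd xs = x \<and> last xs = y \<and>
           (\<forall>i. 0 < i \<and> i < length xs - 1 \<longrightarrow>
              gdist E (xs ! i) c > r \<and> real (gdist E (xs ! i) x) \<le> D))"
  shows "\<forall>w \<epsilon> \<rho>. visual_metric E c w \<epsilon> \<rho> \<longrightarrow> linearly_connected (gromov_boundary E c) \<rho>"
proof (intro allI impI)
  fix w \<epsilon> and \<rho> :: "(nat \<Rightarrow> 'v) set \<Rightarrow> (nat \<Rightarrow> 'v) set \<Rightarrow> real"
  assume vm: "visual_metric E c w \<epsilon> \<rho>"
  obtain \<delta> where d0: "\<delta> \<ge> 0" and fp: "\<forall>w x y z. gprod E w x y \<ge> min (gprod E w x z) (gprod E w y z) - \<delta>"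
    and sg: "simple_graph E" and cn: "connected_graph E"
    using hyp unfolding gromov_hyperbolic_graph_def by blast
  interpret S: setting E \<delta> c D
    by unfold_locales (use sg cn d0 fp outward Dpos cond3 cond4 in auto)
  let ?B = "gromov_boundary E c"
  obtain k1 k2 where eps: "\<epsilon> > 0" and ms: "Metric_space ?B \<rho>" and k1: "k1 > 0" and k2: "k2 > 0"
    and bnd: "\<forall>\<xi>\<in>?B. \<forall>\<eta>\<in>?B. k1 * eexp_neg \<epsilon> (bprod E w \<xi> \<eta>) \<le> \<rho> \<xi> \<eta> \<and> \<rho> \<xi> \<eta> \<le> k2 * eexp_neg \<epsilon> (bprod E w \<xi> \<eta>)"
    using vm unfolding visual_metric_def by blast
  define Tn where "Tn = nat \<lfloor>4 * \<delta> + 4\<rfloor>"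
  define dcw where "dcw = real (gdist E c w)"
  define Xc where "Xc = S.CC (nat \<lceil>2 * D + 2\<rceil>) + (3 * real Tn + 3) / 2 + 2 * \<delta> + dcw"
  define A where "A = real Tn + 1 + dcw + 4 * \<delta> + Xc"
  define L where "L = k2 / k1 * exp (\<epsilon> * A)"
  have Lpos: "L > 0" unfolding L_def using k1 k2 by simp
  show "linearly_connected ?B \<rho>"
    unfolding linearly_connected_def
  proof (intro exI[of _ L] conjI ballI Lpos)
    fix \<xi> \<eta> assume xi: "\<xi> \<in> ?B" and eta: "\<eta> \<in> ?B"
    show "\<exists>K\<subseteq>?B. \<xi> \<in> K \<and> \<eta> \<in> K \<and> compactin (Metric_space.mtopology ?B \<rho>) K \<and>
          connectedin (Metric_space.mtopology ?B \<rho>) K \<and> (\<forall>a\<in>K. \<forall>b\<in>K. \<rho> a b \<le> L * \<rho> \<xi> \<eta>)"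
    proof (cases "\<xi> = \<eta>")
      case True
      have "compactin (Metric_space.mtopology ?B \<rho>) {\<xi>}" using xi Metric_space.topspace_mtopology[OF ms] by simp
      moreover have "connectedin (Metric_space.mtopology ?B \<rho>) {\<xi>}" using xi Metric_space.topspace_mtopology[OF ms] by simp
      moreover have "\<rho> \<xi> \<xi> = 0" using Metric_space.mdist_zero[OF ms xi] .
      ultimately show ?thesis using True xi by (intro exI[of _ "{\<xi>}"]) auto
    next
      case False
      obtain \<gamma> where g: "geodesic_ray E \<gamma>" "\<gamma> 0 = c" "\<gamma> \<in> \<xi>" using rays xi by blast
      obtain \<gamma>' where g': "geodesic_ray E \<gamma>'" "\<gamma>' 0 = c" "\<gamma>' \<in> \<eta>" using rays eta by blast
      have ex: "\<exists>k. gdist E (\<gamma> k) (\<gamma>' k) > Tn"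
      proof (rule ccontr)
        assume "\<not> ?thesis"
        then have "\<And>k. gdist E (\<gamma> k) (\<gamma>' k) \<le> Tn" by (simp add: not_less)
        then have "seq_equiv E c \<gamma> \<gamma>'" using S.rays_equiv[OF g(1,2) g'(1,2)] by blast
        then have "cls E c \<gamma> = cls E c \<gamma>'" by (rule S.cls_eq)
        then show False using False S.boundary_mem(2)[OF xi g(3)] S.boundary_mem(2)[OF eta g'(3)] by simp
      qed
      define n0 where "n0 = (LEAST k. gdist E (\<gamma> k) (\<gamma>' k) > Tn)"
      have n0: "gdist E (\<gamma> n0) (\<gamma>' n0) > Tn" unfolding n0_def using ex by (rule LeastI_ex)
      have "n0 \<noteq> 0" using n0 g(2) g'(2) by (metis S.gdist_refl not_less0)
      then obtain p where p: "n0 = Suc p" using not0_implies_Suc by blast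
      have hp: "gdist E (\<gamma> p) (\<gamma>' p) \<le> Tn" using not_less_Least[of p "\<lambda>k. gdist E (\<gamma> k) (\<gamma>' k) > Tn"] p n0_def
        by (simp add: not_less)
      have big: "real (gdist E (\<gamma> (Suc p)) (\<gamma>' (Suc p))) > 4 * \<delta> + 4"
      proof -
        have "real (gdist E (\<gamma> (Suc p)) (\<gamma>' (Suc p))) \<ge> real Tn + 1" using n0 p by simp
        moreover have "real Tn + 1 > 4 * \<delta> + 4" unfolding Tn_def using d0 by linarith
        ultimately show ?thesis by linarith
      qed
      have bp: "bprod E w \<xi> \<eta> \<le> ereal (real (Suc p) + gdist E c w + 4 * \<delta>)"
        using S.bprod_bound[OF xi eta g(1,2) g'(1,2) g(3) g'(3) big] .
      have lowr: "\<rho> \<xi> \<eta> \<ge> k1 * exp (- \<epsilon> * (real (Suc p) + dcw + 4 * \<delta>))"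
      proof -
        have "eexp_neg \<epsilon> (bprod E w \<xi> \<eta>) \<ge> exp (- \<epsilon> * (real (Suc p) + dcw + 4 * \<delta>))"
          using eexp_lower[OF eps] bp d0 unfolding dcw_def by simp
        then have "k1 * eexp_neg \<epsilon> (bprod E w \<xi> \<eta>) \<ge> k1 * exp (- \<epsilon> * (real (Suc p) + dcw + 4 * \<delta>))"
          using k1 by simp
        then show ?thesis using bnd xi eta by fastforce
      qed
      obtain L0 where L0: "spath E L0" "\<forall>x\<in>set L0. gdist E x c \<ge> p - Tn" "hd L0 = \<gamma> (p - Tn)"
        "last L0 = \<gamma>' (p - Tn)" "length L0 \<le> 3 * Tn + 3"
        using S.init_chain[OF g(1,2) g'(1,2) hp] by blast
      interpret V: vconstr E \<delta> c D \<gamma> \<gamma>' "p - Tn" L0 w \<epsilon> k2 \<rho>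
      proof -
        have "constr E \<delta> c D \<gamma> \<gamma>' (p - Tn) L0"
          by (intro constr.intro S.setting_axioms constr_axioms.intro) (use g g' L0 in auto)
        moreover have "vconstr_axioms E c w \<epsilon> k2 \<rho>"
          by (intro vconstr_axioms.intro) (use eps k2 ms bnd in auto)
        ultimately show "vconstr E \<delta> c D \<gamma> \<gamma>' (p - Tn) L0 w \<epsilon> k2 \<rho>"
          by (intro vconstr.intro)
      qed
      have diam: "\<rho> a b \<le> L * \<rho> \<xi> \<eta>" if ab: "a \<in> V.Kset" "b \<in> V.Kset" for a b
      proof -
        have "\<rho> a b \<le> k2 * exp (- \<epsilon> * (real (p - Tn) - (S.CC (nat \<lceil>2 * D + 2\<rceil>) + real (length L0) / 2 + 2 * \<delta> + real (gdist E c w))))"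
          using V.K_diam[OF ab] .
        also have "\<dots> \<le> k2 * exp (- \<epsilon> * (real p - real Tn - Xc))"
        proof -
          have "real (length L0) \<le> 3 * real Tn + 3" using L0(5) by linarith
          moreover have "real (p - Tn) \<ge> real p - real Tn" by (cases "Tn \<le> p") (auto simp: of_nat_diff)
          ultimately have "real (p - Tn) - (S.CC (nat \<lceil>2 * D + 2\<rceil>) + real (length L0) / 2 + 2 * \<delta> + real (gdist E c w)) \<ge> real p - real Tn - Xc"
            unfolding Xc_def dcw_def by (intro diff_mono) (simp_all add: field_simps)
          then show ?thesis using eps k2 by simp
        qed
        also have "\<dots> = L * (k1 * exp (- \<epsilon> * (real (Suc p) + dcw + 4 * \<delta>)))"
        proof -
          have "L * (k1 * exp (- \<epsilon> * (real (Suc p) + dcw + 4 * \<delta>))) = k2 * (exp (\<epsilon> * A) * exp (- \<epsilon> * (real (Suc p) + dcw + 4 * \<delta>)))"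
            unfolding L_def using k1 by (simp add: field_simps)
          also have "exp (\<epsilon> * A) * exp (- \<epsilon> * (real (Suc p) + dcw + 4 * \<delta>)) = exp (- \<epsilon> * (real p - real Tn - Xc))"
            unfolding A_def by (simp add: exp_add[symmetric] algebra_simps)
          finally show ?thesis by simp
        qed
        also have "\<dots> \<le> L * \<rho> \<xi> \<eta>" using lowr Lpos by simp
        finally show ?thesis .
      qed
      show ?thesis
        using V.K_sub V.xi_in[OF xi g(3)] V.eta_in[OF eta g'(3)] V.K_compact V.K_connected diam
        by blast
    qed
  qed
qed


end
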